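(* Consider the system described in the context and assume (H1) and (H2). Then every steady state of the system is of one of the following nine types ($i\in\{1,2\}$), with components listed as $(S_1^1,X_1^1,S_2^1,X_2^1\mid S_1^2,X_1^2,S_2^2,X_2^2)$, and each type exists if and only if the stated existence condition holds: \begin{enumerate} \item $\mathcal{E}_{00}^{00}=(S_1^{\mathrm{in}},0,S_2^{\mathrm{in}},0\mid S_1^{\mathrm{in}},0,S_2^{\mathrm{in}},0)$; always exists. \item $\mathcal{E}_{00}^{0i}=\bigl(S_1^{\mathrm{in}},0,S_2^{\mathrm{in}},0\mid S_1^{\mathrm{in}},0,\lambda_2^{2i},\tfrac{S_2^{\mathrm{in}}-\lambda_2^{2i}}{\alpha k_3}\bigr)$; exists iff $S_2^{\mathrm{in}}>\lambda_2^{2i}$. \item $\mathcal{E}_{00}^{10}=\bigl(S_1^{\mathrm{in}},0,S_2^{\mathrm{in}},0\mid \lambda_1^2,\tfrac{S_1^{\mathrm{in}}-\lambda_1^2}{\alpha k_1},S_2^{\mathrm{in}}+\tfrac{k_2}{k_1}(S_1^{\mathrm{in}}-\lambda_1^2),0\bigr)$; exists iff $S_1^{\mathrm{in}}>\lambda_1^2$. \item $\mathcal{E}_{00}^{1i}=\bigl(S_1^{\mathrm{in}},0,S_2^{\mathrm{in}},0\mid \lambda_1^2,\tfrac{S_1^{\mathrm{in}}-\lambda_1^2}{\alpha k_1},\lambda_2^{2i},\tfrac{k_2(S_1^{\mathrm{in}}-F_{2i})}{\alpha k_1k_3}\bigr)$; exists iff $S_1^{\mathrm{in}}>\max(\lambda_1^2,F_{2i})$.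 \item $\mathcal{E}_{10}^{10}=\bigl(\lambda_1^1,X_1^{1*},S_2^{\mathrm{in}}+\tfrac{k_2}{k_1}(S_1^{\mathrm{in}}-\lambda_1^1),0\mid S_1^{\mathrm{in}}-\alpha k_1X_1^{2*},X_1^{2*},S_2^{\mathrm{in}}+\alpha k_2X_1^{2*},0\bigr)$; exists iff $S_1^{\mathrm{in}}>\lambda_1^1$. \item $\mathcal{E}_{10}^{1i}=\bigl(\lambda_1^1,X_1^{1*},S_2^{\mathrm{in}}+\tfrac{k_2}{k_1}(S_1^{\mathrm{in}}-\lambda_1^1),0\mid S_1^{\mathrm{in}}-\alpha k_1X_1^{2*},X_1^{2*},\lambda_2^{2i},\tfrac{\phi_i}{\alpha k_3}\bigr)$; exists iff $S_1^{\mathrm{in}}>\lambda_1^1$ and $\phi_i>0$. \item $\mathcal{E}_{0i}^{01}=\bigl(S_1^{\mathrm{in}},0,\lambda_2^{1i},\tfrac{S_2^{\mathrm{in}}-\lambda_2^{1i}}{\alpha k_3}\mid S_1^{\mathrm{in}},0,S_2^{\mathrm{in}}-\alpha k_3X_2^{2*},X_2^{2*}\bigr)$, where $X_2^{2*}$ is a solution of $f_2(x)=g_2(x)$ built with $S_2^{1*}=\lambda_2^{1i}$, $X_1^{1*}=0$, $X_1^{2*}=0$, $X_2^{1*}=\tfrac{S_2^{\mathrm{in}}-\lambda_2^{1i}}{\alpha k_3}$; exists iff $S_2^{\mathrm{in}}>\lambda_2^{1i}$. \item $\mathcal{E}_{0i}^{11}=\bigl(S_1^{\mathrm{in}},0,\lambda_2^{1i},\tfrac{S_2^{\mathrm{in}}-\lambda_2^{1i}}{\alpha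 k_3}\mid \lambda_1^2,\tfrac{S_1^{\mathrm{in}}-\lambda_1^2}{\alpha k_1},\tfrac{k_2}{k_1}(S_1^{\mathrm{in}}-\lambda_1^2)+S_2^{\mathrm{in}}-\alpha k_3X_2^{2*},X_2^{2*}\bigr)$, where $X_2^{2*}$ is a solution of $f_2(x)=g_2(x)$ built with $S_2^{1*}=\lambda_2^{1i}$, $X_1^{1*}=0$, $X_1^{2*}=\tfrac{S_1^{\mathrm{in}}-\lambda_1^2}{\alpha k_1}$, $X_2^{1*}=\tfrac{S_2^{\mathrm{in}}-\lambda_2^{1i}}{\alpha k_3}$; exists iff $S_1^{\mathrm{in}}>\lambda_1^2$ and $S_2^{\mathrm{in}}>\lambda_2^{1i}$. \item $\mathcal{E}_{1i}^{11}=\bigl(\lambda_1^1,X_1^{1*},\lambda_2^{1i},\tfrac{k_2(S_1^{\mathrm{in}}-F_{1i})}{\alpha k_1k_3}\mid S_1^{\mathrm{in}}-\alpha k_1X_1^{2*},X_1^{2*},S_2^{\mathrm{in}}+\alpha k_2X_1^{2*}-\alpha k_3X_2^{2*},X_2^{2*}\bigr)$, where $X_2^{2*}$ is a solution of $f_2(x)=g_2(x)$ built with $S_2^{1*}=\lambda_2^{1i}$, $X_1^{1*}=\tfrac{S_1^{\mathrm{in}}-\lambda_1^1}{\alpha k_1}$, $X_1^{2*}$ as defined in the context, $X_2^{1*}=\tfrac{k_2(S_1^{\mathrm{in}}-F_{1i})}{\alpha k_1k_3}$; exists iff $S_1^{\mathrm{in}}>\max(\lambda_1^1,F_{1i})$.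 \end{enumerate}
   Context: Consider the system of ODEs for $\xi=(S_1^1,X_1^1,S_2^1,X_2^1,S_1^2,X_1^2,S_2^2,X_2^2)\in\mathbb{R}_+^8$: $\dot S_1^1=D_1(S_1^{\mathrm{in}}-S_1^1)-k_1\mu_1(S_1^1)X_1^1$, $\dot X_1^1=(\mu_1(S_1^1)-\alpha D_1)X_1^1$, $\dot S_2^1=D_1(S_2^{\mathrm{in}}-S_2^1)+k_2\mu_1(S_1^1)X_1^1-k_3\mu_2(S_2^1)X_2^1$, $\dot X_2^1=(\mu_2(S_2^1)-\alpha D_1)X_2^1$, $\dot S_1^2=D_2(S_1^1-S_1^2)-k_1\mu_1(S_1^2)X_1^2$, $\dot X_1^2=\alpha D_2(X_1^1-X_1^2)+\mu_1(S_1^2)X_1^2$, $\dot S_2^2=D_2(S_2^1-S_2^2)+k_2\mu_1(S_1^2)X_1^2-k_3\mu_2(S_2^2)X_2^2$, $\dot X_2^2=\alpha D_2(X_2^1-X_2^2)+\mu_2(S_2^2)X_2^2$. Here $D>0$, $r\in(0,1)$, $r_1=r$, $r_2=1-r$, $D_i=D/r_i$, $\alpha\in(0,1)$, $k_1,k_2,k_3>0$, $S_1^{\mathrm{in}},S_2^{\mathrm{in}}>0$. The functions $\mu_1,\mu_2\in\mathcal C^1(\mathbb R_+)$ satisfy (H1): $\mu_1(0)=0$, $\lim_{s\to\infty}\mu_1(s)=m_1$, $\mu_1'(s)>0$ for $s>0$; (H2): $\mu_2(0)=0$, $\lim_{s\to\infty}\mu_2(s)=0$, and there is $S_2^{\mathrm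 m}>0$ with $\mu_2'>0$ on $(0,S_2^{\mathrm m})$ and $\mu_2'<0$ on $(S_2^{\mathrm m},\infty)$. Notation ($i,j\in\{1,2\}$): $\lambda_1^i$ is the unique solution of $\mu_1(S)=\alpha D_i$ when $D<r_im_1/\alpha$, and $\lambda_1^i=+\infty$ otherwise; $\lambda_2^{i1}<\lambda_2^{i2}$ are the two solutions of $\mu_2(S)=\alpha D_i$ when $D\le r_i\mu_2(S_2^{\mathrm m})/\alpha$, and $+\infty$ otherwise; $F_{ij}=\lambda_1^i+\frac{k_1}{k_2}(\lambda_2^{ij}-S_2^{\mathrm{in}})$. When $S_1^{\mathrm{in}}>\lambda_1^1$, put $X_1^{1*}=(S_1^{\mathrm{in}}-\lambda_1^1)/(\alpha k_1)$, $f_1(x)=\mu_1(S_1^{\mathrm{in}}-\alpha k_1x)$ on $[0,S_1^{\mathrm{in}}/(\alpha k_1)]$, $g_1(x)=\alpha D_2(x-X_1^{1*})/x$, and let $X_1^{2*}$ be the unique solution of $f_1(x)=g_1(x)$ in $(X_1^{1*},S_1^{\mathrm{in}}/(\alpha k_1))$; set $\phi_j=S_2^{\mathrm{in}}+\alpha k_2X_1^{2*}-\lambda_2^{2j}$. Given numbers $S_2^{1*},X_1^{1*},X_2^{1*},X_1^{2*}$ (specified in each case), define $g_2(x)=\alpha D_2(x-X_2^{1*})/x$ on $(0,\infty)$ and $f_2(x)=\mu_2\bigl(S_2^{1*}-\alpha k_2(X_1^{1*}-X_1^{2*})+\alpha k_3(X_2^{1*}-x)\bigr)$ on $[0,d]$,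 $d=X_2^{1*}+(S_2^{1*}-\alpha k_2(X_1^{1*}-X_1^{2*}))/(\alpha k_3)$. *)

theory Defs
  imports Complex_Main "HOL-Library.Extended_Real"
begin

text \<open>Parameters of the two-compartment chemostat model.  pm1 is the limit m_1 of mu_1,
  pS2m the maximiser S_2^m of mu_2 from (H2).\<close>

record chemo =
  pD :: real
  pr :: real
  palpha :: real
  pk1 :: real
  pk2 :: real
  pk3 :: real
  pS1in :: real
  pS2in :: real
  pmu1 :: "real \<Rightarrow> real"
  pmu2 :: "real \<Rightarrow> real"
  pm1 :: real
  pS2m :: real

text \<open>States: (S_1^1, X_1^1, S_2^1, X_2^1, S_1^2, X_1^2, S_2^2, X_2^2).\<close>
type_synonym state = "real \<times> real \<times> real \<times> real \<times> real \<times> real \<times> real \<times> real"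

definition H1 :: "(real \<Rightarrow> real) \<Rightarrow> real \<Rightarrow> bool" where
  "H1 mu m \<longleftrightarrow> mu 0 = 0 \<and> (mu \<longlongrightarrow> m) at_top \<and>
     (\<exists>mu'. continuous_on {0..} mu' \<and>
        (\<forall>s\<ge>0. (mu has_real_derivative mu' s) (at s within {0..})) \<and>
        (\<forall>s>0. mu' s > 0))"

definition H2 :: "(real \<Rightarrow> real) \<Rightarrow> real \<Rightarrow> bool" where
  "H2 mu Sm \<longleftrightarrow> Sm > 0 \<and> mu 0 = 0 \<and> (mu \<longlongrightarrow> 0) at_top \<and>
     (\<exists>mu'. continuous_on {0..} mu' \<and>
        (\<forall>s\<ge>0. (mu has_real_derivative mu' s) (at s within {0..})) \<and>
        (\<forall>s. 0 < s \<and> s < Sm \<longrightarrow> mu' s > 0) \<and>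
        (\<forall>s. Sm < s \<longrightarrow> mu' s < 0))"

definition rr :: "chemo \<Rightarrow> nat \<Rightarrow> real" where
  "rr P i = (if i = 1 then pr P else 1 - pr P)"

definition Dc :: "chemo \<Rightarrow> nat \<Rightarrow> real" where
  "Dc P i = pD P / rr P i"

definition steady :: "chemo \<Rightarrow> state \<Rightarrow> bool" where
  "steady P \<xi> \<longleftrightarrow> (case \<xi> of (S11, X11, S21, X21, S12, X12, S22, X22) \<Rightarrow>
     0 \<le> S11 \<and> 0 \<le> X11 \<and> 0 \<le> S21 \<and> 0 \<le> X21 \<and>
     0 \<le> S12 \<and> 0 \<le> X12 \<and> 0 \<le> S22 \<and> 0 \<le> X22 \<and>
     Dc P 1 * (pS1in P - S11) - pk1 P * pmu1 P S11 * X11 = 0 \<and>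
     (pmu1 P S11 - palpha P * Dc P 1) * X11 = 0 \<and>
     Dc P 1 * (pS2in P - S21) + pk2 P * pmu1 P S11 * X11 - pk3 P * pmu2 P S21 * X21 = 0 \<and>
     (pmu2 P S21 - palpha P * Dc P 1) * X21 = 0 \<and>
     Dc P 2 * (S11 - S12) - pk1 P * pmu1 P S12 * X12 = 0 \<and>
     palpha P * Dc P 2 * (X11 - X12) + pmu1 P S12 * X12 = 0 \<and>
     Dc P 2 * (S21 - S22) + pk2 P * pmu1 P S12 * X12 - pk3 P * pmu2 P S22 * X22 = 0 \<and>
     palpha P * Dc P 2 * (X21 - X22) + pmu2 P S22 * X22 = 0)"

definition lam1 :: "chemo \<Rightarrow> nat \<Rightarrow> ereal" where
  "lam1 P i = (if pD P < rr P i * pm1 P / palpha P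
      then ereal (THE s. 0 \<le> s \<and> pmu1 P s = palpha P * Dc P i) else \<infinity>)"

definition lam2 :: "chemo \<Rightarrow> nat \<Rightarrow> nat \<Rightarrow> ereal" where
  "lam2 P i j = (if pD P \<le> rr P i * pmu2 P (pS2m P) / palpha P
      then ereal (if j = 1
        then (THE s. 0 \<le> s \<and> s \<le> pS2m P \<and> pmu2 P s = palpha P * Dc P i)
        else (THE s. pS2m P \<le> s \<and> pmu2 P s = palpha P * Dc P i))
      else \<infinity>)"

definition l1 :: "chemo \<Rightarrow> nat \<Rightarrow> real" where "l1 P i = real_of_ereal (lam1 P i)"
definition l2 :: "chemo \<Rightarrow> nat \<Rightarrow> nat \<Rightarrow> real" where "l2 P i j = real_of_ereal (lam2 P i j)"

definition FF :: "chemo \<Rightarrow> nat \<Rightarrow> nat \<Rightarrow> ereal" where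
  "FF P i j = lam1 P i + ereal (pk1 P / pk2 P) * (lam2 P i j - ereal (pS2in P))"

text \<open>X_1^{1*}, f_1, g_1, X_1^{2*} (meaningful when S_1^in > lambda_1^1).\<close>
definition X11s :: "chemo \<Rightarrow> real" where
  "X11s P = (pS1in P - l1 P 1) / (palpha P * pk1 P)"

definition f1 :: "chemo \<Rightarrow> real \<Rightarrow> real" where
  "f1 P x = pmu1 P (pS1in P - palpha P * pk1 P * x)"

definition g1 :: "chemo \<Rightarrow> real \<Rightarrow> real" where
  "g1 P x = palpha P * Dc P 2 * (x - X11s P) / x"

definition X12s :: "chemo \<Rightarrow> real" where
  "X12s P = (THE x. X11s P < x \<and> x < pS1in P / (palpha P * pk1 P) \<and> f1 P x = g1 P x)"

definition phi :: "chemo \<Rightarrow> nat \<Rightarrow> ereal" where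
  "phi P j = ereal (pS2in P + palpha P * pk2 P * X12s P) - lam2 P 2 j"

text \<open>f_2, g_2 built from given numbers a = S_2^{1*}, b = X_1^{1*}, c = X_1^{2*}, e = X_2^{1*};
  a solution of f_2(x) = g_2(x) is an x in [0,d] \<inter> (0,oo).\<close>
definition f2 :: "chemo \<Rightarrow> real \<Rightarrow> real \<Rightarrow> real \<Rightarrow> real \<Rightarrow> real \<Rightarrow> real" where
  "f2 P a b c e x = pmu2 P (a - palpha P * pk2 P * (b - c) + palpha P * pk3 P * (e - x))"

definition g2 :: "chemo \<Rightarrow> real \<Rightarrow> real \<Rightarrow> real" where
  "g2 P e x = palpha P * Dc P 2 * (x - e) / x"

definition dd :: "chemo \<Rightarrow> real \<Rightarrow> real \<Rightarrow> real \<Rightarrow> real \<Rightarrow> real" where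
  "dd P a b c e = e + (a - palpha P * pk2 P * (b - c)) / (palpha P * pk3 P)"

definition sol2 :: "chemo \<Rightarrow> real \<Rightarrow> real \<Rightarrow> real \<Rightarrow> real \<Rightarrow> real \<Rightarrow> bool" where
  "sol2 P a b c e x \<longleftrightarrow> 0 < x \<and> x \<le> dd P a b c e \<and> f2 P a b c e x = g2 P e x"

text \<open>Each type requires the lambdas it uses to be finite (so that the
  formula is defined) and the biomass components designated as present by its label to be
  positive (the zero ones are zero by the formula).\<close>

definition E00_00 :: "chemo \<Rightarrow> state \<Rightarrow> bool" where
  "E00_00 P \<xi> \<longleftrightarrow> \<xi> = (pS1in P, 0, pS2in P, 0, pS1in P, 0, pS2in P, 0)"

definition E00_0i :: "chemo \<Rightarrow> nat \<Rightarrow> state \<Rightarrow> bool" where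
  "E00_0i P i \<xi> \<longleftrightarrow> lam2 P 2 i \<noteq> \<infinity> \<and>
     (let X22 = (pS2in P - l2 P 2 i) / (palpha P * pk3 P) in X22 > 0 \<and>
      \<xi> = (pS1in P, 0, pS2in P, 0, pS1in P, 0, l2 P 2 i, X22))"

definition E00_10 :: "chemo \<Rightarrow> state \<Rightarrow> bool" where
  "E00_10 P \<xi> \<longleftrightarrow> lam1 P 2 \<noteq> \<infinity> \<and>
     (let X12 = (pS1in P - l1 P 2) / (palpha P * pk1 P) in X12 > 0 \<and>
      \<xi> = (pS1in P, 0, pS2in P, 0, l1 P 2, X12,
            pS2in P + pk2 P / pk1 P * (pS1in P - l1 P 2), 0))"

definition E00_1i :: "chemo \<Rightarrow> nat \<Rightarrow> state \<Rightarrow> bool" where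
  "E00_1i P i \<xi> \<longleftrightarrow> lam1 P 2 \<noteq> \<infinity> \<and> lam2 P 2 i \<noteq> \<infinity> \<and>
     (let X12 = (pS1in P - l1 P 2) / (palpha P * pk1 P);
          X22 = pk2 P * (pS1in P - real_of_ereal (FF P 2 i)) / (palpha P * pk1 P * pk3 P)
      in X12 > 0 \<and> X22 > 0 \<and>
      \<xi> = (pS1in P, 0, pS2in P, 0, l1 P 2, X12, l2 P 2 i, X22))"

definition E10_10 :: "chemo \<Rightarrow> state \<Rightarrow> bool" where
  "E10_10 P \<xi> \<longleftrightarrow> lam1 P 1 \<noteq> \<infinity> \<and> ereal (pS1in P) > lam1 P 1 \<and>
     X11s P > 0 \<and> X12s P > 0 \<and>
     \<xi> = (l1 P 1, X11s P, pS2in P + pk2 P / pk1 P * (pS1in P - l1 P 1), 0,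
           pS1in P - palpha P * pk1 P * X12s P, X12s P, pS2in P + palpha P * pk2 P * X12s P, 0)"

definition E10_1i :: "chemo \<Rightarrow> nat \<Rightarrow> state \<Rightarrow> bool" where
  "E10_1i P i \<xi> \<longleftrightarrow> lam1 P 1 \<noteq> \<infinity> \<and> ereal (pS1in P) > lam1 P 1 \<and> lam2 P 2 i \<noteq> \<infinity> \<and>
     (let X22 = real_of_ereal (phi P i) / (palpha P * pk3 P) in
      X11s P > 0 \<and> X12s P > 0 \<and> X22 > 0 \<and>
      \<xi> = (l1 P 1, X11s P, pS2in P + pk2 P / pk1 P * (pS1in P - l1 P 1), 0,
            pS1in P - palpha P * pk1 P * X12s P, X12s P, l2 P 2 i, X22))"

definition E0i_01 :: "chemo \<Rightarrow> nat \<Rightarrow> state \<Rightarrow> bool" where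
  "E0i_01 P i \<xi> \<longleftrightarrow> lam2 P 1 i \<noteq> \<infinity> \<and>
     (let X21 = (pS2in P - l2 P 1 i) / (palpha P * pk3 P) in X21 > 0 \<and>
      (\<exists>x. sol2 P (l2 P 1 i) 0 0 X21 x \<and>
        \<xi> = (pS1in P, 0, l2 P 1 i, X21, pS1in P, 0, pS2in P - palpha P * pk3 P * x, x)))"

definition E0i_11 :: "chemo \<Rightarrow> nat \<Rightarrow> state \<Rightarrow> bool" where
  "E0i_11 P i \<xi> \<longleftrightarrow> lam1 P 2 \<noteq> \<infinity> \<and> lam2 P 1 i \<noteq> \<infinity> \<and>
     (let X21 = (pS2in P - l2 P 1 i) / (palpha P * pk3 P);
          X12 = (pS1in P - l1 P 2) / (palpha P * pk1 P) in X21 > 0 \<and> X12 > 0 \<and>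
      (\<exists>x. sol2 P (l2 P 1 i) 0 X12 X21 x \<and>
        \<xi> = (pS1in P, 0, l2 P 1 i, X21, l1 P 2, X12,
              pk2 P / pk1 P * (pS1in P - l1 P 2) + pS2in P - palpha P * pk3 P * x, x)))"

definition E1i_11 :: "chemo \<Rightarrow> nat \<Rightarrow> state \<Rightarrow> bool" where
  "E1i_11 P i \<xi> \<longleftrightarrow> lam1 P 1 \<noteq> \<infinity> \<and> ereal (pS1in P) > lam1 P 1 \<and> lam2 P 1 i \<noteq> \<infinity> \<and>
     (let X21 = pk2 P * (pS1in P - real_of_ereal (FF P 1 i)) / (palpha P * pk1 P * pk3 P) in
      X11s P > 0 \<and> X12s P > 0 \<and> X21 > 0 \<and>
      (\<exists>x. sol2 P (l2 P 1 i) (X11s P) (X12s P) X21 x \<and>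
        \<xi> = (l1 P 1, X11s P, l2 P 1 i, X21,
              pS1in P - palpha P * pk1 P * X12s P, X12s P,
              pS2in P + palpha P * pk2 P * X12s P - palpha P * pk3 P * x, x)))"

end

theory Submission
  imports Defs
begin

lemma alg_steady:
  fixes D1 D2 a k1 k2 k3 S1 S2 m11 m21 m12 m22 S11 X11 S21 X21 S12 X12 S22 X22 :: real
  assumes "D1 > 0" "D2 > 0"
  shows "(D1*(S1 - S11) - k1*m11*X11 = 0 \<and> (m11 - a*D1)*X11 = 0 \<and>
     D1*(S2 - S21) + k2*m11*X11 - k3*m21*X21 = 0 \<and> (m21 - a*D1)*X21 = 0 \<and>
     D2*(S11 - S12) - k1*m12*X12 = 0 \<and> a*D2*(X11-X12) + m12*X12 = 0 \<and>
     D2*(S21-S22) + k2*m12*X12 - k3*m22*X22 = 0 \<and> a*D2*(X21-X22) + m22*X22 = 0)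
   \<longleftrightarrow> ((m11 - a*D1)*X11 = 0 \<and> (m21 - a*D1)*X21 = 0 \<and>
     S11 = S1 - a*k1*X11 \<and> S21 = S2 + a*k2*X11 - a*k3*X21 \<and>
     S12 = S11 - a*k1*(X12 - X11) \<and> S22 = S21 + a*k2*(X12-X11) - a*k3*(X22-X21) \<and>
     m12*X12 = a*D2*(X12-X11) \<and> m22*X22 = a*D2*(X22-X21))"
proof
  assume h: "D1*(S1 - S11) - k1*m11*X11 = 0 \<and> (m11 - a*D1)*X11 = 0 \<and>
     D1*(S2 - S21) + k2*m11*X11 - k3*m21*X21 = 0 \<and> (m21 - a*D1)*X21 = 0 \<and>
     D2*(S11 - S12) - k1*m12*X12 = 0 \<and> a*D2*(X11-X12) + m12*X12 = 0 \<and>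
     D2*(S21-S22) + k2*m12*X12 - k3*m22*X22 = 0 \<and> a*D2*(X21-X22) + m22*X22 = 0"
  then have e: "D1*(S1 - S11) - k1*m11*X11 = 0" "(m11 - a*D1)*X11 = 0"
     "D1*(S2 - S21) + k2*m11*X11 - k3*m21*X21 = 0" "(m21 - a*D1)*X21 = 0"
     "D2*(S11 - S12) - k1*m12*X12 = 0" "a*D2*(X11-X12) + m12*X12 = 0"
     "D2*(S21-S22) + k2*m12*X12 - k3*m22*X22 = 0" "a*D2*(X21-X22) + m22*X22 = 0" by auto
  have 1: "D1 * (S11 - (S1 - a*k1*X11)) = 0" using e(1,2) by algebra
  have 2: "D1 * (S21 - (S2 + a*k2*X11 - a*k3*X21)) = 0" using e(2,3,4) by algebra
  have 3: "D2 * (S12 - (S11 - a*k1*(X12 - X11))) = 0" using e(5,6) by algebra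
  have 4: "D2 * (S22 - (S21 + a*k2*(X12-X11) - a*k3*(X22-X21))) = 0" using e(6,7,8) by algebra
  have 5: "m12*X12 = a*D2*(X12-X11)" "m22*X22 = a*D2*(X22-X21)" using e(6,8) by algebra+
  show "(m11 - a*D1)*X11 = 0 \<and> (m21 - a*D1)*X21 = 0 \<and>
     S11 = S1 - a*k1*X11 \<and> S21 = S2 + a*k2*X11 - a*k3*X21 \<and>
     S12 = S11 - a*k1*(X12 - X11) \<and> S22 = S21 + a*k2*(X12-X11) - a*k3*(X22-X21) \<and>
     m12*X12 = a*D2*(X12-X11) \<and> m22*X22 = a*D2*(X22-X21)"
    using 1 2 3 4 5 e(2,4) assms by auto
next
  assume h: "(m11 - a*D1)*X11 = 0 \<and> (m21 - a*D1)*X21 = 0 \<and>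
     S11 = S1 - a*k1*X11 \<and> S21 = S2 + a*k2*X11 - a*k3*X21 \<and>
     S12 = S11 - a*k1*(X12 - X11) \<and> S22 = S21 + a*k2*(X12-X11) - a*k3*(X22-X21) \<and>
     m12*X12 = a*D2*(X12-X11) \<and> m22*X22 = a*D2*(X22-X21)"
  then have e: "(m11 - a*D1)*X11 = 0" "(m21 - a*D1)*X21 = 0"
     "S11 = S1 - a*k1*X11" "S21 = S2 + a*k2*X11 - a*k3*X21"
     "S12 = S11 - a*k1*(X12 - X11)" "S22 = S21 + a*k2*(X12-X11) - a*k3*(X22-X21)"
     "m12*X12 = a*D2*(X12-X11)" "m22*X22 = a*D2*(X22-X21)" by auto
  have "D1*(S1 - S11) - k1*m11*X11 = 0" using e by algebra
  moreover have "D1*(S2 - S21) + k2*m11*X11 - k3*m21*X21 = 0" using e by algebra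
  moreover have "D2*(S11 - S12) - k1*m12*X12 = 0" using e by algebra
  moreover have "a*D2*(X11-X12) + m12*X12 = 0" using e by algebra
  moreover have "D2*(S21-S22) + k2*m12*X12 - k3*m22*X22 = 0" using e by algebra
  moreover have "a*D2*(X21-X22) + m22*X22 = 0" using e by algebra
  ultimately show "D1*(S1 - S11) - k1*m11*X11 = 0 \<and> (m11 - a*D1)*X11 = 0 \<and>
     D1*(S2 - S21) + k2*m11*X11 - k3*m21*X21 = 0 \<and> (m21 - a*D1)*X21 = 0 \<and>
     D2*(S11 - S12) - k1*m12*X12 = 0 \<and> a*D2*(X11-X12) + m12*X12 = 0 \<and>
     D2*(S21-S22) + k2*m12*X12 - k3*m22*X22 = 0 \<and> a*D2*(X21-X22) + m22*X22 = 0"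
    using e(1,2) by auto
qed

locale cctx =
  fixes P :: chemo
  assumes Dpos: "pD P > 0" and rpos: "0 < pr P" and rlt: "pr P < 1"
    and apos: "0 < palpha P" and alt: "palpha P < 1"
    and k1pos: "pk1 P > 0" and k2pos: "pk2 P > 0" and k3pos: "pk3 P > 0"
    and S1pos: "pS1in P > 0" and S2pos: "pS2in P > 0"
    and h1: "H1 (pmu1 P) (pm1 P)" and h2: "H2 (pmu2 P) (pS2m P)"
begin

lemma rr_pos: "rr P i > 0" using rpos rlt by (simp add: rr_def)
lemma Dc_pos: "Dc P i > 0" using rr_pos Dpos by (simp add: Dc_def)

lemma mu1_props: "pmu1 P 0 = 0" "(pmu1 P \<longlongrightarrow> pm1 P) at_top"
  "continuous_on {0..} (pmu1 P)"
  "\<And>x y. 0 \<le> x \<Longrightarrow> x < y \<Longrightarrow> pmu1 P x < pmu1 P y"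
proof -
  obtain mu' where c: "continuous_on {0..} mu'" and d: "\<forall>s\<ge>0. (pmu1 P has_real_derivative mu' s) (at s within {0..})"
    and p: "\<forall>s>0. mu' s > 0" and "pmu1 P 0 = 0" "(pmu1 P \<longlongrightarrow> pm1 P) at_top"
    using h1 unfolding H1_def by blast
  then show "pmu1 P 0 = 0" "(pmu1 P \<longlongrightarrow> pm1 P) at_top" by auto
  show co: "continuous_on {0..} (pmu1 P)" by (rule DERIV_continuous_on[where D=mu']) (use d in auto)
  fix x y :: real assume xy: "0 \<le> x" "x < y"
  show "pmu1 P x < pmu1 P y"
  proof (rule DERIV_pos_imp_increasing_open[OF xy(2)])
    fix z assume z: "x < z" "z < y"
    have "(pmu1 P has_real_derivative mu' z) (at z within {0<..})"
      using z xy by (intro DERIV_subset[OF d[rule_format]]) auto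
    then have "(pmu1 P has_real_derivative mu' z) (at z)"
      using z xy by (subst (asm) at_within_open) auto
    then show "\<exists>y. DERIV (pmu1 P) z :> y \<and> y > 0" using p z xy by auto
  next
    show "continuous_on {x..y} (pmu1 P)" using xy by (intro continuous_on_subset[OF co]) auto
  qed
qed

lemma mu2_props: "pmu2 P 0 = 0" "(pmu2 P \<longlongrightarrow> 0) at_top" "pS2m P > 0"
  "continuous_on {0..} (pmu2 P)"
  "\<And>x y. 0 \<le> x \<Longrightarrow> x < y \<Longrightarrow> y \<le> pS2m P \<Longrightarrow> pmu2 P x < pmu2 P y"
  "\<And>x y. pS2m P \<le> x \<Longrightarrow> x < y \<Longrightarrow> pmu2 P x > pmu2 P y"
proof -
  obtain mu' where c: "continuous_on {0..} mu'" and d: "\<forall>s\<ge>0. (pmu2 P has_real_derivative mu' s) (at s within {0..})"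
    and p: "\<forall>s. 0 < s \<and> s < pS2m P \<longrightarrow> mu' s > 0" and n: "\<forall>s. pS2m P < s \<longrightarrow> mu' s < 0"
    and "pmu2 P 0 = 0" "(pmu2 P \<longlongrightarrow> 0) at_top" "pS2m P > 0"
    using h2 unfolding H2_def by blast
  then show "pmu2 P 0 = 0" "(pmu2 P \<longlongrightarrow> 0) at_top" "pS2m P > 0" by auto
  show co: "continuous_on {0..} (pmu2 P)" by (rule DERIV_continuous_on[where D=mu']) (use d in auto)
  have dz: "(pmu2 P has_real_derivative mu' z) (at z)" if "z > 0" for z
  proof -
    have "(pmu2 P has_real_derivative mu' z) (at z within {0<..})"
      using that by (intro DERIV_subset[OF d[rule_format]]) auto
    then show ?thesis using that by (subst (asm) at_within_open) auto
  qed
  fix x y :: real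
  show "pmu2 P x < pmu2 P y" if xy: "0 \<le> x" "x < y" "y \<le> pS2m P"
  proof (rule DERIV_pos_imp_increasing_open[OF xy(2)])
    fix z assume z: "x < z" "z < y"
    then show "\<exists>y. DERIV (pmu2 P) z :> y \<and> y > 0" using p z xy dz[of z] by auto
  next
    show "continuous_on {x..y} (pmu2 P)" using xy by (intro continuous_on_subset[OF co]) auto
  qed
  show "pmu2 P x > pmu2 P y" if xy: "pS2m P \<le> x" "x < y"
  proof (rule DERIV_neg_imp_decreasing_open[OF xy(2)])
    fix z assume z: "x < z" "z < y"
    then show "\<exists>y. DERIV (pmu2 P) z :> y \<and> y < 0" using n z xy dz[of z] \<open>pS2m P > 0\<close> by auto
  next
    show "continuous_on {x..y} (pmu2 P)" using xy \<open>pS2m P > 0\<close> by (intro continuous_on_subset[OF co]) auto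
  qed
qed

lemma mu1_pos: "s > 0 \<Longrightarrow> pmu1 P s > 0"
  using mu1_props(1) mu1_props(4)[of 0 s] by auto
lemma mu1_nonneg: "s \<ge> 0 \<Longrightarrow> pmu1 P s \<ge> 0"
  using mu1_pos[of s] mu1_props(1) by (cases "s = 0") auto
lemma mu1_inj: "0 \<le> s \<Longrightarrow> 0 \<le> t \<Longrightarrow> pmu1 P s = pmu1 P t \<Longrightarrow> s = t"
  using mu1_props(4)[of s t] mu1_props(4)[of t s] by (cases s t rule: linorder_cases) auto
lemma mu1_lt_m: assumes "s \<ge> 0" shows "pmu1 P s < pm1 P"
proof -
  have "pmu1 P (s+1) \<le> pm1 P"
  proof (rule tendsto_lowerbound[OF mu1_props(2)])
    show "\<forall>\<^sub>F x in at_top. pmu1 P (s + 1) \<le> pmu1 P x"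
      unfolding eventually_at_top_linorder
      using mu1_props(4)[of "s+1"] assms by (intro exI[of _ "s+1"]) (auto simp: le_less)
  qed simp
  then show ?thesis using mu1_props(4)[of s "s+1"] assms by simp
qed

lemma mu2_pos: assumes "s > 0" shows "pmu2 P s > 0"
proof (cases "s \<le> pS2m P")
  case True then show ?thesis using mu2_props(1) mu2_props(5)[of 0 s] assms by auto
next
  case False
  have "0 \<le> pmu2 P (s+1)"
  proof (rule tendsto_upperbound[OF mu2_props(2)])
    show "\<forall>\<^sub>F x in at_top. pmu2 P x \<le> pmu2 P (s + 1)"
      unfolding eventually_at_top_linorder
      using mu2_props(6)[of "s+1"] False by (intro exI[of _ "s+1"]) (auto simp: le_less)
  qed simp
  then show ?thesis using mu2_props(6)[of s "s+1"] False by simp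
qed
lemma mu2_nonneg: "s \<ge> 0 \<Longrightarrow> pmu2 P s \<ge> 0"
  using mu2_pos[of s] mu2_props(1) by (cases "s = 0") auto
lemma mu2_le_max: "s \<ge> 0 \<Longrightarrow> pmu2 P s \<le> pmu2 P (pS2m P)"
  using mu2_props(5)[of s "pS2m P"] mu2_props(6)[of "pS2m P" s] by (cases s "pS2m P" rule: linorder_cases) auto
lemma mu2_inj1: "0 \<le> s \<Longrightarrow> 0 \<le> t \<Longrightarrow> s \<le> pS2m P \<Longrightarrow> t \<le> pS2m P \<Longrightarrow> pmu2 P s = pmu2 P t \<Longrightarrow> s = t"
  using mu2_props(5)[of s t] mu2_props(5)[of t s] by (cases s t rule: linorder_cases) auto
lemma mu2_inj2: "pS2m P \<le> s \<Longrightarrow> pS2m P \<le> t \<Longrightarrow> pmu2 P s = pmu2 P t \<Longrightarrow> s = t"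
  using mu2_props(6)[of s t] mu2_props(6)[of t s] by (cases s t rule: linorder_cases) auto

lemma aD_pos: "palpha P * Dc P i > 0" using apos Dc_pos by simp

lemma lam1_char: assumes "0 \<le> s" "pmu1 P s = palpha P * Dc P i" shows "lam1 P i = ereal s"
proof -
  have "palpha P * (pD P / rr P i) < pm1 P" using mu1_lt_m[OF assms(1)] assms(2) by (simp add: Dc_def)
  then have c: "pD P < rr P i * pm1 P / palpha P" using rr_pos[of i] apos by (simp add: field_simps)
  have "(THE s. 0 \<le> s \<and> pmu1 P s = palpha P * Dc P i) = s"
    using assms mu1_inj by (intro the_equality) auto
  then show ?thesis using c by (simp add: lam1_def)
qed

lemma lam1_fin: assumes "lam1 P i \<noteq> \<infinity>"
  shows "0 < l1 P i \<and> pmu1 P (l1 P i) = palpha P * Dc P i \<and> lam1 P i = ereal (l1 P i)"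
proof -
  have "pD P < rr P i * pm1 P / palpha P" using assms by (auto simp: lam1_def split: if_splits)
  then have "palpha P * (pD P / rr P i) < pm1 P" using rr_pos[of i] apos by (simp add: field_simps)
  then have lt: "palpha P * Dc P i < pm1 P" by (simp add: Dc_def)
  obtain N where N: "\<And>x. x \<ge> N \<Longrightarrow> palpha P * Dc P i < pmu1 P x"
    using order_tendstoD(1)[OF mu1_props(2) lt] unfolding eventually_at_top_linorder by blast
  define x where "x = max N 0"
  have x: "x \<ge> 0" "palpha P * Dc P i < pmu1 P x" using N[of x] by (auto simp: x_def)
  have "\<exists>s. 0 \<le> s \<and> s \<le> x \<and> pmu1 P s = palpha P * Dc P i"
    using x aD_pos[of i] mu1_props(1) by (intro IVT' continuous_on_subset[OF mu1_props(3)]) auto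
  then obtain s where s: "0 \<le> s" "pmu1 P s = palpha P * Dc P i" by blast
  have "s \<noteq> 0" using s mu1_props(1) aD_pos[of i] by auto
  then show ?thesis using lam1_char[OF s] s by (simp add: l1_def)
qed

lemma lam2_char: assumes "0 \<le> s" "pmu2 P s = palpha P * Dc P i"
  shows "s \<le> pS2m P \<Longrightarrow> lam2 P i 1 = ereal s" "pS2m P \<le> s \<Longrightarrow> lam2 P i 2 = ereal s"
proof -
  have "palpha P * (pD P / rr P i) \<le> pmu2 P (pS2m P)" using mu2_le_max[OF assms(1)] assms(2) by (simp add: Dc_def)
  then have c: "pD P \<le> rr P i * pmu2 P (pS2m P) / palpha P" using rr_pos[of i] apos by (simp add: field_simps)
  show "lam2 P i 1 = ereal s" if "s \<le> pS2m P"
  proof -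
    have "(THE s. 0 \<le> s \<and> s \<le> pS2m P \<and> pmu2 P s = palpha P * Dc P i) = s"
      using assms that mu2_inj1 by (intro the_equality) auto
    then show ?thesis using c by (simp add: lam2_def)
  qed
  show "lam2 P i 2 = ereal s" if "pS2m P \<le> s"
  proof -
    have "(THE s. pS2m P \<le> s \<and> pmu2 P s = palpha P * Dc P i) = s"
      using assms that mu2_inj2 by (intro the_equality) auto
    then show ?thesis using c by (simp add: lam2_def)
  qed
qed

lemma lam2_fin: assumes "lam2 P i j \<noteq> \<infinity>" and j: "j \<in> {1,2}"
  shows "0 < l2 P i j \<and> pmu2 P (l2 P i j) = palpha P * Dc P i \<and> lam2 P i j = ereal (l2 P i j)"
proof -
  have "pD P \<le> rr P i * pmu2 P (pS2m P) / palpha P" using assms by (auto simp: lam2_def split: if_splits)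
  then have "palpha P * (pD P / rr P i) \<le> pmu2 P (pS2m P)" using rr_pos[of i] apos by (simp add: field_simps)
  then have le: "palpha P * Dc P i \<le> pmu2 P (pS2m P)" by (simp add: Dc_def)
  have "\<exists>s. 0 \<le> s \<and> pmu2 P s = palpha P * Dc P i \<and> lam2 P i j = ereal s"
  proof (cases "j = 1")
    case True
    have "\<exists>s. 0 \<le> s \<and> s \<le> pS2m P \<and> pmu2 P s = palpha P * Dc P i"
      using le aD_pos[of i] mu2_props(1,3) by (intro IVT' continuous_on_subset[OF mu2_props(4)]) auto
    then obtain s where s: "0 \<le> s" "s \<le> pS2m P" "pmu2 P s = palpha P * Dc P i" by blast
    then show ?thesis using lam2_char(1)[OF s(1,3)] True by auto
  next
    case False
    then have j2: "j = 2" using j by auto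
    obtain N where N: "\<And>x. x \<ge> N \<Longrightarrow> pmu2 P x < palpha P * Dc P i"
      using order_tendstoD(2)[OF mu2_props(2) aD_pos[of i]] unfolding eventually_at_top_linorder by blast
    define x where "x = max N (pS2m P)"
    have x: "x \<ge> pS2m P" "pmu2 P x < palpha P * Dc P i" using N[of x] by (auto simp: x_def)
    have "\<exists>s. pS2m P \<le> s \<and> s \<le> x \<and> pmu2 P s = palpha P * Dc P i"
      using x le mu2_props(3) by (intro IVT2' continuous_on_subset[OF mu2_props(4)]) auto
    then obtain s where s: "pS2m P \<le> s" "pmu2 P s = palpha P * Dc P i" by blast
    have s0: "0 \<le> s" using s mu2_props(3) by simp
    then show ?thesis using lam2_char(2)[OF s0 s(2) s(1)] j2 s s0 by auto
  qed
  then obtain s where s: "0 \<le> s" "pmu2 P s = palpha P * Dc P i" "lam2 P i j = ereal s" by blast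
  have "s \<noteq> 0" using s mu2_props(1) aD_pos[of i] by auto
  then show ?thesis using s by (simp add: l2_def)
qed

lemma steady_iff: "steady P (S11,X11,S21,X21,S12,X12,S22,X22) \<longleftrightarrow>
 (0 \<le> S11 \<and> 0 \<le> X11 \<and> 0 \<le> S21 \<and> 0 \<le> X21 \<and> 0 \<le> S12 \<and> 0 \<le> X12 \<and> 0 \<le> S22 \<and> 0 \<le> X22 \<and>
  (pmu1 P S11 - palpha P * Dc P 1) * X11 = 0 \<and> (pmu2 P S21 - palpha P * Dc P 1) * X21 = 0 \<and>
  S11 = pS1in P - palpha P * pk1 P * X11 \<and>
  S21 = pS2in P + palpha P * pk2 P * X11 - palpha P * pk3 P * X21 \<and>
  S12 = S11 - palpha P * pk1 P * (X12 - X11) \<and>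
  S22 = S21 + palpha P * pk2 P * (X12 - X11) - palpha P * pk3 P * (X22 - X21) \<and>
  pmu1 P S12 * X12 = palpha P * Dc P 2 * (X12 - X11) \<and>
  pmu2 P S22 * X22 = palpha P * Dc P 2 * (X22 - X21))"
  unfolding steady_def prod.case
  using alg_steady[OF Dc_pos[of 1] Dc_pos[of 2], of "pS1in P" S11 "pk1 P" "pmu1 P S11" X11 "palpha P"
     "pS2in P" S21 "pk2 P" "pk3 P" "pmu2 P S21" X21 S12 "pmu1 P S12" X12 S22 "pmu2 P S22" X22]
  by (simp only: mult.assoc)

definition Bnd where "Bnd = pS1in P / (palpha P * pk1 P)"

lemma X12s_props: assumes "ereal (pS1in P) > lam1 P 1"
  shows "0 < X11s P" "X11s P < X12s P" "X12s P < Bnd" "f1 P (X12s P) = g1 P (X12s P)"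
    "\<And>x. X11s P < x \<Longrightarrow> x < Bnd \<Longrightarrow> f1 P x = g1 P x \<Longrightarrow> x = X12s P"
proof -
  have fin: "lam1 P 1 \<noteq> \<infinity>" using assms by auto
  note L = lam1_fin[OF fin]
  have lt: "l1 P 1 < pS1in P" using assms L by simp
  have ak: "palpha P * pk1 P > 0" using apos k1pos by simp
  show X11: "0 < X11s P" using lt ak by (simp add: X11s_def)
  have XB: "X11s P < Bnd" using L ak by (simp add: X11s_def Bnd_def divide_strict_right_mono)
  have argX: "pS1in P - palpha P * pk1 P * X11s P = l1 P 1" using apos k1pos by (simp add: X11s_def)
  have argB: "pS1in P - palpha P * pk1 P * Bnd = 0" using apos k1pos by (simp add: Bnd_def)
  have f1dec: "f1 P y < f1 P x" if "X11s P \<le> x" "x < y" "y \<le> Bnd" for x y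
  proof -
    have "palpha P * pk1 P * y \<le> palpha P * pk1 P * Bnd" using that ak by (intro mult_left_mono) auto
    then have "0 \<le> pS1in P - palpha P * pk1 P * y" using argB by simp
    moreover have "pS1in P - palpha P * pk1 P * y < pS1in P - palpha P * pk1 P * x" using mult_strict_left_mono[OF _ ak, of x y] that by simp
    ultimately show ?thesis unfolding f1_def by (rule mu1_props(4))
  qed
  have g1inc: "g1 P x < g1 P y" if "X11s P \<le> x" "x < y" for x y
  proof -
    have xp: "x > 0" using that X11 by simp
    have "X11s P / y < X11s P / x" using xp that X11 by (simp add: divide_strict_left_mono)
    then have "palpha P * Dc P 2 * (1 - X11s P / x) < palpha P * Dc P 2 * (1 - X11s P / y)"
      using aD_pos[of 2] by (intro mult_strict_left_mono) auto
    moreover have "palpha P * Dc P 2 * (z - X11s P) / z = palpha P * Dc P 2 * (1 - X11s P / z)" if "z > 0" for z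
      using that by (simp add: field_simps)
    ultimately show ?thesis using xp that X11 by (simp add: g1_def)
  qed
  have uniq: "x = y" if "X11s P < x" "x < Bnd" "f1 P x = g1 P x" "X11s P < y" "y < Bnd" "f1 P y = g1 P y" for x y
  proof (rule ccontr)
    assume "x \<noteq> y"
    then consider "x < y" | "y < x" by linarith
    then show False
    proof cases
      case 1 then show False using f1dec[of x y] g1inc[of x y] that by auto
    next
      case 2 then show False using f1dec[of y x] g1inc[of y x] that by auto
    qed
  qed
  have cont: "continuous_on {X11s P..Bnd} (\<lambda>x. f1 P x - g1 P x)"
  proof -
    have "continuous_on {X11s P..Bnd} (f1 P)"
      unfolding f1_def
    proof (rule continuous_on_compose2[OF mu1_props(3)])
      show "continuous_on {X11s P..Bnd} (\<lambda>x. pS1in P - palpha P * pk1 P * x)" by (intro continuous_intros)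
      show "(\<lambda>x. pS1in P - palpha P * pk1 P * x) ` {X11s P..Bnd} \<subseteq> {0..}"
      proof
        fix z assume "z \<in> (\<lambda>x. pS1in P - palpha P * pk1 P * x) ` {X11s P..Bnd}"
        then obtain x where "x \<le> Bnd" "z = pS1in P - palpha P * pk1 P * x" by auto
        moreover have "palpha P * pk1 P * x \<le> palpha P * pk1 P * Bnd" using \<open>x \<le> Bnd\<close> ak by (intro mult_left_mono) auto
        ultimately show "z \<in> {0..}" using argB by simp
      qed
    qed
    moreover have "continuous_on {X11s P..Bnd} (g1 P)"
      unfolding g1_def using X11 by (intro continuous_intros) auto
    ultimately show ?thesis by (intro continuous_intros)
  qed
  have hX: "f1 P (X11s P) - g1 P (X11s P) = palpha P * Dc P 1"
    using argX L by (simp add: f1_def g1_def)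
  have hB: "f1 P Bnd - g1 P Bnd < 0"
  proof -
    have "Bnd > 0" using X11 XB by simp
    then have "g1 P Bnd > 0" using XB aD_pos[of 2] by (simp add: g1_def)
    then show ?thesis using argB mu1_props(1) by (simp add: f1_def)
  qed
  obtain x where x: "X11s P \<le> x" "x \<le> Bnd" "f1 P x - g1 P x = 0"
    using IVT2'[of "\<lambda>x. f1 P x - g1 P x" Bnd 0 "X11s P", OF _ _ _ cont] hX hB aD_pos[of 1] XB by auto
  have x2: "X11s P < x" "x < Bnd" using x hX hB aD_pos[of 1] by (auto simp: le_less)
  have "X12s P = x" unfolding X12s_def Bnd_def[symmetric]
    using x x2 uniq by (intro the_equality) auto
  then show "X11s P < X12s P" "X12s P < Bnd" "f1 P (X12s P) = g1 P (X12s P)" using x x2 by auto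
  show "\<And>y. X11s P < y \<Longrightarrow> y < Bnd \<Longrightarrow> f1 P y = g1 P y \<Longrightarrow> y = X12s P"
    using uniq x x2 \<open>X12s P = x\<close> by auto
qed

lemma sol2_exists: assumes "e > 0" "a - palpha P * pk2 P * (b - c) > 0"
  shows "\<exists>x. sol2 P a b c e x"
proof -
  define A where "A = a - palpha P * pk2 P * (b - c)"
  have ak: "palpha P * pk3 P > 0" using apos k3pos by simp
  have A: "A > 0" using assms A_def by simp
  define d where "d = dd P a b c e"
  have d: "d = e + A / (palpha P * pk3 P)" by (simp add: d_def dd_def A_def)
  have ed: "e < d" using d A ak by simp
  have arg: "a - palpha P * pk2 P * (b - c) + palpha P * pk3 P * (e - x) = palpha P * pk3 P * (d - x)" for x
    using apos k3pos by (simp add: d A_def field_simps)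
  have cont: "continuous_on {e..d} (\<lambda>x. f2 P a b c e x - g2 P e x)"
  proof -
    have "continuous_on {e..d} (f2 P a b c e)"
      unfolding f2_def
    proof (rule continuous_on_compose2[OF mu2_props(4)])
      show "continuous_on {e..d} (\<lambda>x. a - palpha P * pk2 P * (b - c) + palpha P * pk3 P * (e - x))" by (intro continuous_intros)
      show "(\<lambda>x. a - palpha P * pk2 P * (b - c) + palpha P * pk3 P * (e - x)) ` {e..d} \<subseteq> {0..}"
        using ak by (auto simp: arg)
    qed
    moreover have "continuous_on {e..d} (g2 P e)"
      unfolding g2_def using assms by (intro continuous_intros) auto
    ultimately show ?thesis by (intro continuous_intros)
  qed
  have he: "f2 P a b c e e - g2 P e e > 0"
    using mu2_pos[of A] A by (simp add: f2_def g2_def A_def)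
  have hd: "f2 P a b c e d - g2 P e d < 0"
  proof -
    have "g2 P e d > 0" using ed assms aD_pos[of 2] by (simp add: g2_def)
    then show ?thesis using arg[of d] mu2_props(1) by (simp add: f2_def)
  qed
  obtain x where x: "e \<le> x" "x \<le> d" "f2 P a b c e x - g2 P e x = 0"
    using IVT2'[of "\<lambda>x. f2 P a b c e x - g2 P e x" d 0 e, OF _ _ _ cont] he hd ed by auto
  then show ?thesis using assms unfolding sol2_def d_def by (intro exI[of _ x]) auto
qed

lemma X1_cases: assumes st: "steady P (S11,X11,S21,X21,S12,X12,S22,X22)"
  shows "(X11 = 0 \<and> X12 = 0 \<and> S11 = pS1in P \<and> S12 = pS1in P) \<or>
    (X11 = 0 \<and> lam1 P 2 \<noteq> \<infinity> \<and> X12 = (pS1in P - l1 P 2) / (palpha P * pk1 P) \<and> X12 > 0 \<and>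
       S11 = pS1in P \<and> S12 = l1 P 2) \<or>
    (ereal (pS1in P) > lam1 P 1 \<and> lam1 P 1 \<noteq> \<infinity> \<and> X11 = X11s P \<and> X12 = X12s P \<and>
       S11 = l1 P 1 \<and> S12 = pS1in P - palpha P * pk1 P * X12s P)"
proof -
  note F = st[unfolded steady_iff]
  have ak: "palpha P * pk1 P > 0" using apos k1pos by simp
  have nn: "0 \<le> S11" "0 \<le> X11" "0 \<le> S12" "0 \<le> X12" using F by auto
  have c1: "(pmu1 P S11 - palpha P * Dc P 1) * X11 = 0" and L1: "S11 = pS1in P - palpha P * pk1 P * X11"
    and L3: "S12 = S11 - palpha P * pk1 P * (X12 - X11)"
    and c3: "pmu1 P S12 * X12 = palpha P * Dc P 2 * (X12 - X11)" using F by auto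
  have L13: "S12 = pS1in P - palpha P * pk1 P * X12" using L1 L3 by (simp add: algebra_simps)
  show ?thesis
  proof (cases "X11 = 0")
    case True
    show ?thesis
    proof (cases "X12 = 0")
      case True
      then show ?thesis using \<open>X11 = 0\<close> L1 L13 by simp
    next
      case False
      then have "pmu1 P S12 = palpha P * Dc P 2" using c3 \<open>X11 = 0\<close> by simp
      then have l: "lam1 P 2 = ereal S12" using lam1_char nn by simp
      then have "l1 P 2 = S12" by (simp add: l1_def)
      moreover have "X12 = (pS1in P - S12) / (palpha P * pk1 P)" using L13 apos k1pos by (simp add: field_simps)
      ultimately show ?thesis using True L1 l nn False by (simp add: less_le)
    qed
  next
    case False
    then have x11: "X11 > 0" using nn by simp
    have "pmu1 P S11 = palpha P * Dc P 1" using c1 False by simp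
    then have l: "lam1 P 1 = ereal S11" using lam1_char nn by simp
    then have ll: "l1 P 1 = S11" by (simp add: l1_def)
    have S11p: "S11 > 0" using lam1_fin[of 1] l ll by simp
    have lt: "S11 < pS1in P" using L1 x11 ak by simp
    then have gt: "ereal (pS1in P) > lam1 P 1" using l by simp
    have X11e: "X11 = X11s P" using L1 ll apos k1pos by (simp add: X11s_def field_simps)
    note X = X12s_props[OF gt]
    have x12: "X12 > 0"
    proof (rule ccontr)
      assume "\<not> X12 > 0" then have "X12 = 0" using nn by simp
      then show False using c3 x11 aD_pos[of 2] using apos Dc_pos[of 2] by (auto simp: mult_pos_pos)
    qed
    have m: "pmu1 P S12 = palpha P * Dc P 2 * (X12 - X11) / X12" using c3 x12 by (simp add: field_simps)
    have ge: "X12 \<ge> X11"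
    proof -
      have "0 \<le> pmu1 P S12 * X12" using mu1_nonneg[OF nn(3)] nn by simp
      then have "0 \<le> palpha P * Dc P 2 * (X12 - X11)" using c3 by simp
      then show ?thesis using aD_pos[of 2] by (simp add: zero_le_mult_iff)
    qed
    have gt12: "X12 > X11"
    proof (rule ccontr)
      assume "\<not> X12 > X11" then have "X12 = X11" using ge by simp
      then have "pmu1 P S12 = 0" using c3 x12 by simp
      then have "S12 = 0" using mu1_pos[of S12] nn by (cases "S12 = 0") auto
      then show False using L3 \<open>X12 = X11\<close> S11p by simp
    qed
    have "pmu1 P S12 > 0" using m gt12 x12 aD_pos[of 2] by simp
    then have "S12 \<noteq> 0" using mu1_props(1) by auto
    then have "S12 > 0" using nn by simp
    then have "X12 < Bnd" using L13 ak by (simp add: Bnd_def field_simps)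
    moreover have "f1 P X12 = g1 P X12" using m L13 X11e by (simp add: f1_def g1_def)
    ultimately have "X12 = X12s P" using X(5) gt12 X11e by simp
    then show ?thesis using gt l ll X11e L13 by simp
  qed
qed

lemma X2_cases: assumes st: "steady P (S11,X11,S21,X21,S12,X12,S22,X22)"
  shows "(X21 = 0 \<and> X22 = 0) \<or>
    (X21 = 0 \<and> (\<exists>j\<in>{1,2}. lam2 P 2 j \<noteq> \<infinity> \<and> S22 = l2 P 2 j \<and> X22 > 0)) \<or>
    (\<exists>j\<in>{1,2}. lam2 P 1 j \<noteq> \<infinity> \<and> S21 = l2 P 1 j \<and> X21 > 0 \<and> sol2 P S21 X11 X12 X21 X22)"
proof -
  note F = st[unfolded steady_iff]
  have ak: "palpha P * pk3 P > 0" using apos k3pos by simp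
  have nn: "0 \<le> S21" "0 \<le> X21" "0 \<le> S22" "0 \<le> X22" using F by auto
  have c2: "(pmu2 P S21 - palpha P * Dc P 1) * X21 = 0"
    and L4: "S22 = S21 + palpha P * pk2 P * (X12 - X11) - palpha P * pk3 P * (X22 - X21)"
    and c4: "pmu2 P S22 * X22 = palpha P * Dc P 2 * (X22 - X21)" using F by auto
  have lamj: "\<exists>j\<in>{1,2}. lam2 P i j \<noteq> \<infinity> \<and> s = l2 P i j" if "0 \<le> s" "pmu2 P s = palpha P * Dc P i" for s i
  proof (cases "s \<le> pS2m P")
    case True then show ?thesis using lam2_char(1)[OF that] by (intro bexI[of _ 1]) (auto simp: l2_def)
  next
    case False then show ?thesis using lam2_char(2)[OF that] by (intro bexI[of _ 2]) (auto simp: l2_def)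
  qed
  show ?thesis
  proof (cases "X21 = 0")
    case True
    show ?thesis
    proof (cases "X22 = 0")
      case True then show ?thesis using \<open>X21 = 0\<close> by simp
    next
      case False
      then have "pmu2 P S22 = palpha P * Dc P 2" using c4 \<open>X21 = 0\<close> by simp
      then obtain j where "j\<in>{1,2}" "lam2 P 2 j \<noteq> \<infinity>" "S22 = l2 P 2 j" using lamj nn by blast
      then show ?thesis using True False nn by auto
    qed
  next
    case False
    then have x21: "X21 > 0" using nn by simp
    have "pmu2 P S21 = palpha P * Dc P 1" using c2 False by simp
    then obtain j where j: "j\<in>{1,2}" "lam2 P 1 j \<noteq> \<infinity>" "S21 = l2 P 1 j" using lamj nn by blast
    have x22: "X22 > 0"
    proof (rule ccontr)
      assume "\<not> X22 > 0" then have "X22 = 0" using nn by simp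
      then show False using c4 x21 aD_pos[of 2] using apos Dc_pos[of 2] by (auto simp: mult_pos_pos)
    qed
    have "sol2 P S21 X11 X12 X21 X22"
    proof -
      have arg: "S21 - palpha P * pk2 P * (X11 - X12) + palpha P * pk3 P * (X21 - X22) = S22"
        using L4 by (simp add: algebra_simps)
      have "f2 P S21 X11 X12 X21 X22 = g2 P X21 X22"
        unfolding f2_def g2_def arg using c4 x22 by (simp add: field_simps)
      moreover have "X22 \<le> dd P S21 X11 X12 X21"
      proof -
        have "0 \<le> S21 - palpha P * pk2 P * (X11 - X12) + palpha P * pk3 P * (X21 - X22)" using arg nn by simp
        then show ?thesis unfolding dd_def using apos k3pos by (simp add: field_simps)
      qed
      ultimately show ?thesis using x22 by (simp add: sol2_def)
    qed
    then show ?thesis using j x21 by auto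
  qed
qed

lemma cAa: assumes st: "steady P (S11,X11,S21,X21,S12,X12,S22,X22)"
  and "X11 = 0 \<and> X12 = 0 \<and> S11 = pS1in P \<and> S12 = pS1in P" and "X21 = 0 \<and> X22 = 0"
  shows "E00_00 P (S11,X11,S21,X21,S12,X12,S22,X22)"
proof - 
  have L2: "S21 = pS2in P + palpha P * pk2 P * X11 - palpha P * pk3 P * X21"
    and L4: "S22 = S21 + palpha P * pk2 P * (X12 - X11) - palpha P * pk3 P * (X22 - X21)"
    using st[unfolded steady_iff] by auto
  show ?thesis using assms L2 L4 by (simp add: E00_00_def)
qed

lemma cAb: assumes st: "steady P (S11,X11,S21,X21,S12,X12,S22,X22)"
  and "X11 = 0 \<and> X12 = 0 \<and> S11 = pS1in P \<and> S12 = pS1in P"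
  and "X21 = 0" "lam2 P 2 j \<noteq> \<infinity>" "S22 = l2 P 2 j" "X22 > 0"
  shows "E00_0i P j (S11,X11,S21,X21,S12,X12,S22,X22)"
proof - 
  have L2: "S21 = pS2in P + palpha P * pk2 P * X11 - palpha P * pk3 P * X21"
    and L4: "S22 = S21 + palpha P * pk2 P * (X12 - X11) - palpha P * pk3 P * (X22 - X21)"
    using st[unfolded steady_iff] by auto
  have "X22 = (pS2in P - l2 P 2 j) / (palpha P * pk3 P)"
    using assms L2 L4 apos k3pos by (simp add: field_simps)
  then show ?thesis using assms L2 L4 by (simp add: E00_0i_def Let_def)
qed

lemma cAc: assumes st: "steady P (S11,X11,S21,X21,S12,X12,S22,X22)"
  and "X11 = 0 \<and> X12 = 0 \<and> S11 = pS1in P \<and> S12 = pS1in P"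
  and "lam2 P 1 j \<noteq> \<infinity>" "S21 = l2 P 1 j" "X21 > 0" "sol2 P S21 X11 X12 X21 X22"
  shows "E0i_01 P j (S11,X11,S21,X21,S12,X12,S22,X22)"
proof - 
  have L2: "S21 = pS2in P + palpha P * pk2 P * X11 - palpha P * pk3 P * X21"
    and L4: "S22 = S21 + palpha P * pk2 P * (X12 - X11) - palpha P * pk3 P * (X22 - X21)"
    using st[unfolded steady_iff] by auto
  have "X21 = (pS2in P - l2 P 1 j) / (palpha P * pk3 P)"
    using assms L2 apos k3pos by (simp add: field_simps)
  moreover have "S22 = pS2in P - palpha P * pk3 P * X22" using assms L2 L4 by (simp add: algebra_simps)
  ultimately show ?thesis using assms unfolding E0i_01_def Let_def by auto
qed


lemma cBa: assumes st: "steady P (S11,X11,S21,X21,S12,X12,S22,X22)"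
  and h: "X11 = 0" "lam1 P 2 \<noteq> \<infinity>" "X12 = (pS1in P - l1 P 2) / (palpha P * pk1 P)" "X12 > 0"
       "S11 = pS1in P" "S12 = l1 P 2"
  and h2: "X21 = 0 \<and> X22 = 0"
  shows "E00_10 P (S11,X11,S21,X21,S12,X12,S22,X22)"
proof - 
  have L2: "S21 = pS2in P + palpha P * pk2 P * X11 - palpha P * pk3 P * X21"
    and L4: "S22 = S21 + palpha P * pk2 P * (X12 - X11) - palpha P * pk3 P * (X22 - X21)"
    using st[unfolded steady_iff] by auto
  have pos: "palpha P \<noteq> 0" "pk1 P \<noteq> 0" "pk2 P \<noteq> 0" "pk3 P \<noteq> 0" using apos k1pos k2pos k3pos by auto
  have "S22 = pS2in P + palpha P * pk2 P * ((pS1in P - l1 P 2) / (palpha P * pk1 P))"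
    using L2 L4 h h2 by simp
  also have "\<dots> = pS2in P + pk2 P / pk1 P * (pS1in P - l1 P 2)" using pos by (simp add: field_simps)
  finally show ?thesis using h h2 L2 by (simp add: E00_10_def Let_def)
qed

lemma cBb: assumes st: "steady P (S11,X11,S21,X21,S12,X12,S22,X22)"
  and h: "X11 = 0" "lam1 P 2 \<noteq> \<infinity>" "X12 = (pS1in P - l1 P 2) / (palpha P * pk1 P)" "X12 > 0"
       "S11 = pS1in P" "S12 = l1 P 2"
  and h2: "X21 = 0" "lam2 P 2 j \<noteq> \<infinity>" "S22 = l2 P 2 j" "X22 > 0" "j \<in> {1,2}"
  shows "E00_1i P j (S11,X11,S21,X21,S12,X12,S22,X22)"
proof - 
  have L2: "S21 = pS2in P + palpha P * pk2 P * X11 - palpha P * pk3 P * X21"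
    and L4: "S22 = S21 + palpha P * pk2 P * (X12 - X11) - palpha P * pk3 P * (X22 - X21)"
    using st[unfolded steady_iff] by auto
  have pos: "palpha P \<noteq> 0" "pk1 P \<noteq> 0" "pk2 P \<noteq> 0" "pk3 P \<noteq> 0" using apos k1pos k2pos k3pos by auto
  have F: "real_of_ereal (FF P 2 j) = l1 P 2 + pk1 P / pk2 P * (l2 P 2 j - pS2in P)"
    using lam1_fin[of 2] lam2_fin[of 2 j] h h2 unfolding FF_def
    by (metis ereal_minus(1) plus_ereal.simps(1) real_of_ereal.simps(1) times_ereal.simps(1))
  have "l2 P 2 j = pS2in P + palpha P * pk2 P * X12 - palpha P * pk3 P * X22" using L2 L4 h h2 by simp
  then have "X22 = (pS2in P + palpha P * pk2 P * X12 - l2 P 2 j) / (palpha P * pk3 P)"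
    using pos by (simp add: field_simps)
  also have "\<dots> = (pS2in P + palpha P * pk2 P * ((pS1in P - l1 P 2) / (palpha P * pk1 P)) - l2 P 2 j) / (palpha P * pk3 P)"
    using h by simp
  also have "\<dots> = pk2 P * (pS1in P - real_of_ereal (FF P 2 j)) / (palpha P * pk1 P * pk3 P)"
    unfolding F using pos by (simp add: field_simps)
  finally show ?thesis using h h2 L2 by (simp add: E00_1i_def Let_def)
qed

lemma cBc: assumes st: "steady P (S11,X11,S21,X21,S12,X12,S22,X22)"
  and h: "X11 = 0" "lam1 P 2 \<noteq> \<infinity>" "X12 = (pS1in P - l1 P 2) / (palpha P * pk1 P)" "X12 > 0"
       "S11 = pS1in P" "S12 = l1 P 2"
  and h2: "lam2 P 1 j \<noteq> \<infinity>" "S21 = l2 P 1 j" "X21 > 0" "sol2 P S21 X11 X12 X21 X22"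
  shows "E0i_11 P j (S11,X11,S21,X21,S12,X12,S22,X22)"
proof - 
  have L2: "S21 = pS2in P + palpha P * pk2 P * X11 - palpha P * pk3 P * X21"
    and L4: "S22 = S21 + palpha P * pk2 P * (X12 - X11) - palpha P * pk3 P * (X22 - X21)"
    using st[unfolded steady_iff] by auto
  have pos: "palpha P \<noteq> 0" "pk1 P \<noteq> 0" "pk2 P \<noteq> 0" "pk3 P \<noteq> 0" using apos k1pos k2pos k3pos by auto
  have "l2 P 1 j = pS2in P - palpha P * pk3 P * X21" using L2 h h2 by simp
  then have x21: "X21 = (pS2in P - l2 P 1 j) / (palpha P * pk3 P)"
    using pos by (simp add: field_simps)
  have "S22 = pS2in P + palpha P * pk2 P * X12 - palpha P * pk3 P * X22" using L2 L4 h(1) by (simp add: algebra_simps)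
  also have "\<dots> = pS2in P + palpha P * pk2 P * ((pS1in P - l1 P 2) / (palpha P * pk1 P)) - palpha P * pk3 P * X22"
    using h by simp
  also have "\<dots> = pk2 P / pk1 P * (pS1in P - l1 P 2) + pS2in P - palpha P * pk3 P * X22"
    using pos by (simp add: field_simps)
  finally show ?thesis using h h2 x21 unfolding E0i_11_def Let_def by auto
qed

lemma cCa: assumes st: "steady P (S11,X11,S21,X21,S12,X12,S22,X22)"
  and h: "ereal (pS1in P) > lam1 P 1" "lam1 P 1 \<noteq> \<infinity>" "X11 = X11s P" "X12 = X12s P"
       "S11 = l1 P 1" "S12 = pS1in P - palpha P * pk1 P * X12s P"
  and h2: "X21 = 0 \<and> X22 = 0"
  shows "E10_10 P (S11,X11,S21,X21,S12,X12,S22,X22)"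
proof - 
  have L2: "S21 = pS2in P + palpha P * pk2 P * X11 - palpha P * pk3 P * X21"
    and L4: "S22 = S21 + palpha P * pk2 P * (X12 - X11) - palpha P * pk3 P * (X22 - X21)"
    using st[unfolded steady_iff] by auto
  have pos: "palpha P \<noteq> 0" "pk1 P \<noteq> 0" "pk2 P \<noteq> 0" "pk3 P \<noteq> 0" using apos k1pos k2pos k3pos by auto
  note X = X12s_props[OF h(1)]
  have "S21 = pS2in P + palpha P * pk2 P * ((pS1in P - l1 P 1) / (palpha P * pk1 P))"
    using L2 h h2 by (simp add: X11s_def)
  also have "\<dots> = pS2in P + pk2 P / pk1 P * (pS1in P - l1 P 1)" using pos by (simp add: field_simps)
  finally have s21: "S21 = pS2in P + pk2 P / pk1 P * (pS1in P - l1 P 1)" .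
  have "S22 = pS2in P + palpha P * pk2 P * X12s P"
    using L2 L4 h h2 by (simp add: algebra_simps)
  then show ?thesis using h h2 X(1-4) s21 by (simp add: E10_10_def)
qed

lemma cCb: assumes st: "steady P (S11,X11,S21,X21,S12,X12,S22,X22)"
  and h: "ereal (pS1in P) > lam1 P 1" "lam1 P 1 \<noteq> \<infinity>" "X11 = X11s P" "X12 = X12s P"
       "S11 = l1 P 1" "S12 = pS1in P - palpha P * pk1 P * X12s P"
  and h2: "X21 = 0" "lam2 P 2 j \<noteq> \<infinity>" "S22 = l2 P 2 j" "X22 > 0" "j \<in> {1,2}"
  shows "E10_1i P j (S11,X11,S21,X21,S12,X12,S22,X22)"
proof - 
  have L2: "S21 = pS2in P + palpha P * pk2 P * X11 - palpha P * pk3 P * X21"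
    and L4: "S22 = S21 + palpha P * pk2 P * (X12 - X11) - palpha P * pk3 P * (X22 - X21)"
    using st[unfolded steady_iff] by auto
  have pos: "palpha P \<noteq> 0" "pk1 P \<noteq> 0" "pk2 P \<noteq> 0" "pk3 P \<noteq> 0" using apos k1pos k2pos k3pos by auto
  note X = X12s_props[OF h(1)]
  have ph: "real_of_ereal (phi P j) = pS2in P + palpha P * pk2 P * X12s P - l2 P 2 j"
    using lam2_fin[of 2 j] h2 unfolding phi_def by (metis ereal_minus(1) real_of_ereal.simps(1))
  have "S21 = pS2in P + palpha P * pk2 P * ((pS1in P - l1 P 1) / (palpha P * pk1 P))"
    using L2 h h2 by (simp add: X11s_def)
  also have "\<dots> = pS2in P + pk2 P / pk1 P * (pS1in P - l1 P 1)" using pos by (simp add: field_simps)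
  finally have s21: "S21 = pS2in P + pk2 P / pk1 P * (pS1in P - l1 P 1)" .
  have "l2 P 2 j = pS2in P + palpha P * pk2 P * X12s P - palpha P * pk3 P * X22"
    using L2 L4 h h2 by (simp add: algebra_simps)
  then have "X22 = real_of_ereal (phi P j) / (palpha P * pk3 P)"
    unfolding ph using pos by (simp add: field_simps)
  then show ?thesis using h h2 X(1-4) s21 by (simp add: E10_1i_def Let_def)
qed

lemma cCc: assumes st: "steady P (S11,X11,S21,X21,S12,X12,S22,X22)"
  and h: "ereal (pS1in P) > lam1 P 1" "lam1 P 1 \<noteq> \<infinity>" "X11 = X11s P" "X12 = X12s P"
       "S11 = l1 P 1" "S12 = pS1in P - palpha P * pk1 P * X12s P"
  and h2: "lam2 P 1 j \<noteq> \<infinity>" "S21 = l2 P 1 j" "X21 > 0" "sol2 P S21 X11 X12 X21 X22" "j \<in> {1,2}"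
  shows "E1i_11 P j (S11,X11,S21,X21,S12,X12,S22,X22)"
proof - 
  have L2: "S21 = pS2in P + palpha P * pk2 P * X11 - palpha P * pk3 P * X21"
    and L4: "S22 = S21 + palpha P * pk2 P * (X12 - X11) - palpha P * pk3 P * (X22 - X21)"
    using st[unfolded steady_iff] by auto
  have pos: "palpha P \<noteq> 0" "pk1 P \<noteq> 0" "pk2 P \<noteq> 0" "pk3 P \<noteq> 0" using apos k1pos k2pos k3pos by auto
  note X = X12s_props[OF h(1)]
  have F: "real_of_ereal (FF P 1 j) = l1 P 1 + pk1 P / pk2 P * (l2 P 1 j - pS2in P)"
    using lam1_fin[of 1] lam2_fin[of 1 j] h h2 unfolding FF_def
    by (metis ereal_minus(1) plus_ereal.simps(1) real_of_ereal.simps(1) times_ereal.simps(1))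
  have "l2 P 1 j = pS2in P + palpha P * pk2 P * ((pS1in P - l1 P 1) / (palpha P * pk1 P)) - palpha P * pk3 P * X21"
    using L2 h h2 by (simp add: X11s_def)
  then have "X21 = (pS2in P + palpha P * pk2 P * ((pS1in P - l1 P 1) / (palpha P * pk1 P)) - l2 P 1 j) / (palpha P * pk3 P)"
    using pos by (simp add: field_simps)
  also have "\<dots> = pk2 P * (pS1in P - real_of_ereal (FF P 1 j)) / (palpha P * pk1 P * pk3 P)"
    unfolding F using pos by (simp add: field_simps)
  finally have x21: "X21 = pk2 P * (pS1in P - real_of_ereal (FF P 1 j)) / (palpha P * pk1 P * pk3 P)" .
  have "S22 = pS2in P + palpha P * pk2 P * X12s P - palpha P * pk3 P * X22"
    using L2 L4 h h2 by (simp add: algebra_simps)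
  then show ?thesis using h h2 X(1-4) x21 unfolding E1i_11_def Let_def by auto
qed

lemma pos_ne: "palpha P \<noteq> 0" "pk1 P \<noteq> 0" "pk2 P \<noteq> 0" "pk3 P \<noteq> 0"
  using apos k1pos k2pos k3pos by auto

lemma classify: assumes "steady P \<xi>"
  shows "E00_00 P \<xi> \<or> (\<exists>i\<in>{1,2}. E00_0i P i \<xi>) \<or> E00_10 P \<xi> \<or>
            (\<exists>i\<in>{1,2}. E00_1i P i \<xi>) \<or> E10_10 P \<xi> \<or> (\<exists>i\<in>{1,2}. E10_1i P i \<xi>) \<or>
            (\<exists>i\<in>{1,2}. E0i_01 P i \<xi>) \<or> (\<exists>i\<in>{1,2}. E0i_11 P i \<xi>) \<or>
            (\<exists>i\<in>{1,2}. E1i_11 P i \<xi>)"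
proof -
  obtain S11 X11 S21 X21 S12 X12 S22 X22 where xi: "\<xi> = (S11,X11,S21,X21,S12,X12,S22,X22)"
    by (metis prod.exhaust)
  have st: "steady P (S11,X11,S21,X21,S12,X12,S22,X22)" using assms xi by simp
  note A = cAa[OF st] cAb[OF st] cAc[OF st]
  note B = cBa[OF st] cBb[OF st] cBc[OF st]
  note C = cCa[OF st] cCb[OF st] cCc[OF st]
  from X1_cases[OF st] show ?thesis
  proof (elim disjE)
    assume h: "X11 = 0 \<and> X12 = 0 \<and> S11 = pS1in P \<and> S12 = pS1in P"
    from X2_cases[OF st] show ?thesis
    proof (elim disjE bexE conjE)
      assume "X21 = 0" "X22 = 0" then show ?thesis using A(1)[OF h] xi by simp
    next
      fix j assume "X21 = 0" "j\<in>{1,2}" "lam2 P 2 j \<noteq> \<infinity>" "S22 = l2 P 2 j" "0 < X22"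
      then show ?thesis using A(2)[OF h, of j] xi by blast
    next
      fix j assume "j\<in>{1,2}" "lam2 P 1 j \<noteq> \<infinity>" "S21 = l2 P 1 j" "0 < X21" "sol2 P S21 X11 X12 X21 X22"
      then show ?thesis using A(3)[OF h, of j] xi by blast
    qed
  next
    assume h: "X11 = 0 \<and> lam1 P 2 \<noteq> \<infinity> \<and> X12 = (pS1in P - l1 P 2) / (palpha P * pk1 P) \<and> X12 > 0 \<and>
       S11 = pS1in P \<and> S12 = l1 P 2"
    then have h': "X11 = 0" "lam1 P 2 \<noteq> \<infinity>" "X12 = (pS1in P - l1 P 2) / (palpha P * pk1 P)" "X12 > 0"
       "S11 = pS1in P" "S12 = l1 P 2" by auto
    from X2_cases[OF st] show ?thesis
    proof (elim disjE bexE conjE)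
      assume "X21 = 0" "X22 = 0" then show ?thesis using B(1)[OF h'] xi by simp
    next
      fix j assume "X21 = 0" "j\<in>{1,2}" "lam2 P 2 j \<noteq> \<infinity>" "S22 = l2 P 2 j" "0 < X22"
      then show ?thesis using B(2)[OF h', of j] xi by blast
    next
      fix j assume "j\<in>{1,2}" "lam2 P 1 j \<noteq> \<infinity>" "S21 = l2 P 1 j" "0 < X21" "sol2 P S21 X11 X12 X21 X22"
      then show ?thesis using B(3)[OF h', of j] xi by blast
    qed
  next
    assume h: "ereal (pS1in P) > lam1 P 1 \<and> lam1 P 1 \<noteq> \<infinity> \<and> X11 = X11s P \<and> X12 = X12s P \<and>
       S11 = l1 P 1 \<and> S12 = pS1in P - palpha P * pk1 P * X12s P"
    then have h': "ereal (pS1in P) > lam1 P 1" "lam1 P 1 \<noteq> \<infinity>" "X11 = X11s P" "X12 = X12s P"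
       "S11 = l1 P 1" "S12 = pS1in P - palpha P * pk1 P * X12s P" by auto
    from X2_cases[OF st] show ?thesis
    proof (elim disjE bexE conjE)
      assume "X21 = 0" "X22 = 0" then show ?thesis using C(1)[OF h'] xi by simp
    next
      fix j assume "X21 = 0" "j\<in>{1,2}" "lam2 P 2 j \<noteq> \<infinity>" "S22 = l2 P 2 j" "0 < X22"
      then show ?thesis using C(2)[OF h', of j] xi by blast
    next
      fix j assume "j\<in>{1,2}" "lam2 P 1 j \<noteq> \<infinity>" "S21 = l2 P 1 j" "0 < X21" "sol2 P S21 X11 X12 X21 X22"
      then show ?thesis using C(3)[OF h', of j] xi by blast
    qed
  qed
qed

lemma sol2_steady: assumes "sol2 P a b c e x" "S22 = a - palpha P * pk2 P * (b - c) + palpha P * pk3 P * (e - x)"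
  shows "S22 \<ge> 0" "pmu2 P S22 * x = palpha P * Dc P 2 * (x - e)" "x > 0"
proof -
  have x: "0 < x" "x \<le> dd P a b c e" "f2 P a b c e x = g2 P e x" using assms(1) by (auto simp: sol2_def)
  show "x > 0" using x by simp
  have "pmu2 P S22 = palpha P * Dc P 2 * (x - e) / x" using x(3) assms(2) by (simp add: f2_def g2_def)
  then show "pmu2 P S22 * x = palpha P * Dc P 2 * (x - e)" using x(1) by simp
  have "x - e \<le> (a - palpha P * pk2 P * (b - c)) / (palpha P * pk3 P)" using x(2) by (simp add: dd_def)
  then have "(x - e) * (palpha P * pk3 P) \<le> a - palpha P * pk2 P * (b - c)"
    using apos k3pos by (simp add: pos_le_divide_eq)
  then show "S22 \<ge> 0" using assms(2) by (simp add: algebra_simps)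
qed

lemma FF_fin: assumes "lam1 P i \<noteq> \<infinity>" "lam2 P i j \<noteq> \<infinity>" "j \<in> {1,2}"
  shows "FF P i j = ereal (l1 P i + pk1 P / pk2 P * (l2 P i j - pS2in P))"
  using lam1_fin[OF assms(1)] lam2_fin[OF assms(2,3)] unfolding FF_def
  by (metis ereal_minus(1) plus_ereal.simps(1) times_ereal.simps(1))

lemma FF_inf: assumes "lam2 P i j = \<infinity>" shows "FF P i j = \<infinity>"
proof -
  have "lam1 P i \<noteq> - \<infinity>" by (simp add: lam1_def)
  moreover have "ereal (pk1 P / pk2 P) * (\<infinity> - ereal (pS2in P)) = \<infinity>" using k1pos k2pos by simp
  ultimately show ?thesis using assms unfolding FF_def by simp
qed

lemma ex00: "steady P (pS1in P, 0, pS2in P, 0, pS1in P, 0, pS2in P, 0) \<and> E00_00 P (pS1in P, 0, pS2in P, 0, pS1in P, 0, pS2in P, 0)"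
  using S1pos S2pos by (simp add: steady_iff E00_00_def)


lemma ex0i: assumes i: "i \<in> {1,2}"
  shows "(\<exists>\<xi>. steady P \<xi> \<and> E00_0i P i \<xi>) \<longleftrightarrow> ereal (pS2in P) > lam2 P 2 i"
proof
  assume "\<exists>\<xi>. steady P \<xi> \<and> E00_0i P i \<xi>"
  then obtain \<xi> where e: "E00_0i P i \<xi>" by blast
  then have fin: "lam2 P 2 i \<noteq> \<infinity>" and "(pS2in P - l2 P 2 i) / (palpha P * pk3 P) > 0"
    by (auto simp: E00_0i_def Let_def)
  then have "pS2in P > l2 P 2 i" using apos k3pos mult_pos_pos[OF apos k3pos] by (simp add: zero_less_divide_iff)
  then show "ereal (pS2in P) > lam2 P 2 i" using lam2_fin[OF fin i] by simp
next
  assume h: "ereal (pS2in P) > lam2 P 2 i"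
  then have fin: "lam2 P 2 i \<noteq> \<infinity>" by auto
  note L = lam2_fin[OF fin i]
  have lt: "l2 P 2 i < pS2in P" using h L by simp
  define X22 where "X22 = (pS2in P - l2 P 2 i) / (palpha P * pk3 P)"
  have x1: "palpha P * pk3 P * X22 = pS2in P - l2 P 2 i" using pos_ne by (simp add: X22_def)
  have x2: "X22 > 0" using lt apos k3pos by (simp add: X22_def)
  have "steady P (pS1in P, 0, pS2in P, 0, pS1in P, 0, l2 P 2 i, X22)"
    unfolding steady_iff using x1 x2 L S1pos S2pos by simp
  moreover have "E00_0i P i (pS1in P, 0, pS2in P, 0, pS1in P, 0, l2 P 2 i, X22)"
    using fin x2 by (simp add: E00_0i_def Let_def X22_def)
  ultimately show "\<exists>\<xi>. steady P \<xi> \<and> E00_0i P i \<xi>" by blast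
qed

lemma ex10: "(\<exists>\<xi>. steady P \<xi> \<and> E00_10 P \<xi>) \<longleftrightarrow> ereal (pS1in P) > lam1 P 2"
proof
  assume "\<exists>\<xi>. steady P \<xi> \<and> E00_10 P \<xi>"
  then obtain \<xi> where e: "E00_10 P \<xi>" by blast
  then have fin: "lam1 P 2 \<noteq> \<infinity>" and "(pS1in P - l1 P 2) / (palpha P * pk1 P) > 0"
    by (auto simp: E00_10_def Let_def)
  then have "pS1in P > l1 P 2" using apos k1pos mult_pos_pos[OF apos k1pos] by (simp add: zero_less_divide_iff)
  then show "ereal (pS1in P) > lam1 P 2" using lam1_fin[OF fin] by simp
next
  assume h: "ereal (pS1in P) > lam1 P 2"
  then have fin: "lam1 P 2 \<noteq> \<infinity>" by auto
  note L = lam1_fin[OF fin]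
  have lt: "l1 P 2 < pS1in P" using h L by simp
  define X12 where "X12 = (pS1in P - l1 P 2) / (palpha P * pk1 P)"
  have x1: "palpha P * pk1 P * X12 = pS1in P - l1 P 2" using pos_ne by (simp add: X12_def)
  have x2: "X12 > 0" using lt apos k1pos by (simp add: X12_def)
  have x3: "palpha P * pk2 P * X12 = pk2 P / pk1 P * (pS1in P - l1 P 2)" using pos_ne by (simp add: X12_def)
  have x4: "0 \<le> pk2 P / pk1 P * (pS1in P - l1 P 2)" using lt k1pos k2pos by simp
  have "steady P (pS1in P, 0, pS2in P, 0, l1 P 2, X12, pS2in P + pk2 P / pk1 P * (pS1in P - l1 P 2), 0)"
    unfolding steady_iff using x1 x2 x3 x4 L S1pos S2pos by simp
  moreover have "E00_10 P (pS1in P, 0, pS2in P, 0, l1 P 2, X12, pS2in P + pk2 P / pk1 P * (pS1in P - l1 P 2), 0)"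
    using fin x2 by (simp add: E00_10_def Let_def X12_def)
  ultimately show "\<exists>\<xi>. steady P \<xi> \<and> E00_10 P \<xi>" by blast
qed

lemma ex1i: assumes i: "i \<in> {1,2}"
  shows "(\<exists>\<xi>. steady P \<xi> \<and> E00_1i P i \<xi>) \<longleftrightarrow> ereal (pS1in P) > max (lam1 P 2) (FF P 2 i)"
proof
  assume "\<exists>\<xi>. steady P \<xi> \<and> E00_1i P i \<xi>"
  then obtain \<xi> where e: "E00_1i P i \<xi>" by blast
  then have fin: "lam1 P 2 \<noteq> \<infinity>" "lam2 P 2 i \<noteq> \<infinity>" and "(pS1in P - l1 P 2) / (palpha P * pk1 P) > 0"
    and "pk2 P * (pS1in P - real_of_ereal (FF P 2 i)) / (palpha P * pk1 P * pk3 P) > 0"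
    by (auto simp: E00_1i_def Let_def)
  then have "pS1in P > l1 P 2" "pS1in P > real_of_ereal (FF P 2 i)"
    using apos k1pos k2pos k3pos mult_pos_pos[OF apos k1pos] mult_pos_pos[OF mult_pos_pos[OF apos k1pos] k3pos] by (auto simp add: zero_less_divide_iff zero_less_mult_iff)
  then show "ereal (pS1in P) > max (lam1 P 2) (FF P 2 i)" using lam1_fin[OF fin(1)] FF_fin[OF fin i] by simp
next
  assume h: "ereal (pS1in P) > max (lam1 P 2) (FF P 2 i)"
  then have h1: "ereal (pS1in P) > lam1 P 2" and h2: "ereal (pS1in P) > FF P 2 i" by auto
  then have fin: "lam1 P 2 \<noteq> \<infinity>" "lam2 P 2 i \<noteq> \<infinity>" using FF_inf[of 2 i] by auto
  note L = lam1_fin[OF fin(1)] and L2 = lam2_fin[OF fin(2) i]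
  define F where "F = l1 P 2 + pk1 P / pk2 P * (l2 P 2 i - pS2in P)"
  have FF: "FF P 2 i = ereal F" using FF_fin[OF fin i] by (simp add: F_def)
  have lt: "l1 P 2 < pS1in P" "F < pS1in P" using h1 h2 L FF by auto
  define X12 where "X12 = (pS1in P - l1 P 2) / (palpha P * pk1 P)"
  define X22 where "X22 = pk2 P * (pS1in P - F) / (palpha P * pk1 P * pk3 P)"
  have x1: "palpha P * pk1 P * X12 = pS1in P - l1 P 2" using pos_ne by (simp add: X12_def)
  have x2: "X12 > 0" using lt apos k1pos by (simp add: X12_def)
  have x5: "X22 > 0" using lt apos k1pos k2pos k3pos by (simp add: X22_def)
  have x3: "l2 P 2 i = pS2in P + palpha P * pk2 P * X12 - palpha P * pk3 P * X22"
    using pos_ne by (simp add: X12_def X22_def F_def field_simps)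
  have "steady P (pS1in P, 0, pS2in P, 0, l1 P 2, X12, l2 P 2 i, X22)"
    unfolding steady_iff using x1 x2 x3 x5 L L2 S1pos S2pos by simp
  moreover have "E00_1i P i (pS1in P, 0, pS2in P, 0, l1 P 2, X12, l2 P 2 i, X22)"
    using fin x2 x5 FF by (simp add: E00_1i_def Let_def X12_def X22_def)
  ultimately show "\<exists>\<xi>. steady P \<xi> \<and> E00_1i P i \<xi>" by blast
qed

lemma ex1010: "(\<exists>\<xi>. steady P \<xi> \<and> E10_10 P \<xi>) \<longleftrightarrow> ereal (pS1in P) > lam1 P 1"
proof
  assume "\<exists>\<xi>. steady P \<xi> \<and> E10_10 P \<xi>"
  then show "ereal (pS1in P) > lam1 P 1" by (auto simp: E10_10_def)
next
  assume h: "ereal (pS1in P) > lam1 P 1"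
  then have fin: "lam1 P 1 \<noteq> \<infinity>" by auto
  note L = lam1_fin[OF fin] and X = X12s_props[OF h]
  have lt: "l1 P 1 < pS1in P" using h L by simp
  have x1: "l1 P 1 = pS1in P - palpha P * pk1 P * X11s P" using pos_ne by (simp add: X11s_def)
  have x2: "pS2in P + pk2 P / pk1 P * (pS1in P - l1 P 1) = pS2in P + palpha P * pk2 P * X11s P"
    using pos_ne by (simp add: X11s_def)
  have x3: "pS1in P - palpha P * pk1 P * X12s P > 0" using X(3) apos k1pos by (simp add: Bnd_def field_simps)
  have x4: "pmu1 P (pS1in P - palpha P * pk1 P * X12s P) * X12s P = palpha P * Dc P 2 * (X12s P - X11s P)"
    using X(2,4) X(1) by (simp add: f1_def g1_def)
  have x5: "0 \<le> pk2 P / pk1 P * (pS1in P - l1 P 1)" using lt k1pos k2pos by simp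
  have "steady P (l1 P 1, X11s P, pS2in P + pk2 P / pk1 P * (pS1in P - l1 P 1), 0,
           pS1in P - palpha P * pk1 P * X12s P, X12s P, pS2in P + palpha P * pk2 P * X12s P, 0)"
    unfolding steady_iff using x1 x2 x3 x4 x5 L X(1-4) S1pos S2pos apos k2pos
    by (simp add: algebra_simps)
  moreover have "E10_10 P (l1 P 1, X11s P, pS2in P + pk2 P / pk1 P * (pS1in P - l1 P 1), 0,
           pS1in P - palpha P * pk1 P * X12s P, X12s P, pS2in P + palpha P * pk2 P * X12s P, 0)"
    using fin h X(1-4) by (simp add: E10_10_def)
  ultimately show "\<exists>\<xi>. steady P \<xi> \<and> E10_10 P \<xi>" by blast
qed

lemma ex101i: assumes i: "i \<in> {1,2}"
  shows "(\<exists>\<xi>. steady P \<xi> \<and> E10_1i P i \<xi>) \<longleftrightarrow> ereal (pS1in P) > lam1 P 1 \<and> phi P i > 0"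
proof
  assume "\<exists>\<xi>. steady P \<xi> \<and> E10_1i P i \<xi>"
  then obtain \<xi> where e: "E10_1i P i \<xi>" by blast
  then have h: "ereal (pS1in P) > lam1 P 1" and fin: "lam2 P 2 i \<noteq> \<infinity>"
    and "real_of_ereal (phi P i) / (palpha P * pk3 P) > 0"
    by (auto simp: E10_1i_def Let_def)
  then have "real_of_ereal (phi P i) > 0"
    using apos k3pos mult_pos_pos[OF apos k3pos] by (auto simp: zero_less_divide_iff)
  moreover have "phi P i = ereal (real_of_ereal (phi P i))"
    using lam2_fin[OF fin i] unfolding phi_def by simp
  ultimately show "ereal (pS1in P) > lam1 P 1 \<and> phi P i > 0" using h by (metis ereal_less(2))
next
  assume "ereal (pS1in P) > lam1 P 1 \<and> phi P i > 0"
  then have h: "ereal (pS1in P) > lam1 P 1" and hp: "phi P i > 0" by auto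
  then have fin1: "lam1 P 1 \<noteq> \<infinity>" by auto
  have fin: "lam2 P 2 i \<noteq> \<infinity>" using hp unfolding phi_def by auto
  note L = lam1_fin[OF fin1] and X = X12s_props[OF h] and L2 = lam2_fin[OF fin i]
  define ph where "ph = pS2in P + palpha P * pk2 P * X12s P - l2 P 2 i"
  have PH: "phi P i = ereal ph" using L2 unfolding phi_def ph_def by simp
  have php: "ph > 0" using hp PH by simp
  define X22 where "X22 = ph / (palpha P * pk3 P)"
  have x22: "X22 > 0" using php apos k3pos by (simp add: X22_def)
  have x22e: "l2 P 2 i = pS2in P + palpha P * pk2 P * X12s P - palpha P * pk3 P * X22"
    using pos_ne by (simp add: X22_def ph_def)
  have lt: "l1 P 1 < pS1in P" using h L by simp
  have x1: "l1 P 1 = pS1in P - palpha P * pk1 P * X11s P" using pos_ne by (simp add: X11s_def)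
  have x2: "pS2in P + pk2 P / pk1 P * (pS1in P - l1 P 1) = pS2in P + palpha P * pk2 P * X11s P"
    using pos_ne by (simp add: X11s_def)
  have x3: "pS1in P - palpha P * pk1 P * X12s P > 0" using X(3) apos k1pos by (simp add: Bnd_def field_simps)
  have x4: "pmu1 P (pS1in P - palpha P * pk1 P * X12s P) * X12s P = palpha P * Dc P 2 * (X12s P - X11s P)"
    using X(2,4) X(1) by (simp add: f1_def g1_def)
  have x5: "0 \<le> pk2 P / pk1 P * (pS1in P - l1 P 1)" using lt k1pos k2pos by simp
  have "steady P (l1 P 1, X11s P, pS2in P + pk2 P / pk1 P * (pS1in P - l1 P 1), 0,
           pS1in P - palpha P * pk1 P * X12s P, X12s P, l2 P 2 i, X22)"
    unfolding steady_iff using x1 x2 x3 x4 x5 x22 x22e L L2 X(1-4) S1pos S2pos apos k2pos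
    by (simp add: algebra_simps)
  moreover have "E10_1i P i (l1 P 1, X11s P, pS2in P + pk2 P / pk1 P * (pS1in P - l1 P 1), 0,
           pS1in P - palpha P * pk1 P * X12s P, X12s P, l2 P 2 i, X22)"
    using fin fin1 h X(1-4) x22 PH by (simp add: E10_1i_def Let_def X22_def)
  ultimately show "\<exists>\<xi>. steady P \<xi> \<and> E10_1i P i \<xi>" by blast
qed

lemma ex0i01: assumes i: "i \<in> {1,2}"
  shows "(\<exists>\<xi>. steady P \<xi> \<and> E0i_01 P i \<xi>) \<longleftrightarrow> ereal (pS2in P) > lam2 P 1 i"
proof
  assume "\<exists>\<xi>. steady P \<xi> \<and> E0i_01 P i \<xi>"
  then obtain \<xi> where e: "E0i_01 P i \<xi>" by blast
  then have fin: "lam2 P 1 i \<noteq> \<infinity>" and "(pS2in P - l2 P 1 i) / (palpha P * pk3 P) > 0"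
    by (auto simp: E0i_01_def Let_def)
  then have "pS2in P > l2 P 1 i" using apos k3pos mult_pos_pos[OF apos k3pos] by (simp add: zero_less_divide_iff)
  then show "ereal (pS2in P) > lam2 P 1 i" using lam2_fin[OF fin i] by simp
next
  assume h: "ereal (pS2in P) > lam2 P 1 i"
  then have fin: "lam2 P 1 i \<noteq> \<infinity>" by auto
  note L = lam2_fin[OF fin i]
  have lt: "l2 P 1 i < pS2in P" using h L by simp
  define X21 where "X21 = (pS2in P - l2 P 1 i) / (palpha P * pk3 P)"
  have x1: "l2 P 1 i = pS2in P - palpha P * pk3 P * X21" using pos_ne by (simp add: X21_def)
  have x2: "X21 > 0" using lt apos k3pos by (simp add: X21_def)
  obtain x where x: "sol2 P (l2 P 1 i) 0 0 X21 x" using sol2_exists[OF x2, of "l2 P 1 i" 0 0] L by auto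
  define S22 where "S22 = pS2in P - palpha P * pk3 P * x"
  have S: "S22 = l2 P 1 i - palpha P * pk2 P * (0 - 0) + palpha P * pk3 P * (X21 - x)"
    using x1 by (simp add: S22_def algebra_simps)
  note Q = sol2_steady[OF x S]
  have "steady P (pS1in P, 0, l2 P 1 i, X21, pS1in P, 0, S22, x)"
    unfolding steady_iff using x1 x2 L Q S1pos S2pos by (simp add: S22_def algebra_simps)
  moreover have "E0i_01 P i (pS1in P, 0, l2 P 1 i, X21, pS1in P, 0, S22, x)"
    using fin x2 x unfolding E0i_01_def Let_def X21_def[symmetric] S22_def by auto
  ultimately show "\<exists>\<xi>. steady P \<xi> \<and> E0i_01 P i \<xi>" by blast
qed

lemma ex0i11: assumes i: "i \<in> {1,2}"
  shows "(\<exists>\<xi>. steady P \<xi> \<and> E0i_11 P i \<xi>) \<longleftrightarrow> ereal (pS1in P) > lam1 P 2 \<and> ereal (pS2in P) > lam2 P 1 i"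
proof
  assume "\<exists>\<xi>. steady P \<xi> \<and> E0i_11 P i \<xi>"
  then obtain \<xi> where e: "E0i_11 P i \<xi>" by blast
  then have fin: "lam2 P 1 i \<noteq> \<infinity>" "lam1 P 2 \<noteq> \<infinity>" and "(pS2in P - l2 P 1 i) / (palpha P * pk3 P) > 0"
    and "(pS1in P - l1 P 2) / (palpha P * pk1 P) > 0"
    by (auto simp: E0i_11_def Let_def)
  then have "pS2in P > l2 P 1 i" "pS1in P > l1 P 2"
    using apos k3pos mult_pos_pos[OF apos k3pos] k1pos mult_pos_pos[OF apos k1pos]
    by (auto simp add: zero_less_divide_iff)
  then show "ereal (pS1in P) > lam1 P 2 \<and> ereal (pS2in P) > lam2 P 1 i"
    using lam2_fin[OF fin(1) i] lam1_fin[OF fin(2)] by simp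
next
  assume "ereal (pS1in P) > lam1 P 2 \<and> ereal (pS2in P) > lam2 P 1 i"
  then have h1: "ereal (pS1in P) > lam1 P 2" and h: "ereal (pS2in P) > lam2 P 1 i" by auto
  then have fin: "lam2 P 1 i \<noteq> \<infinity>" and fin1: "lam1 P 2 \<noteq> \<infinity>" by auto
  note L = lam2_fin[OF fin i] and L1 = lam1_fin[OF fin1]
  have lt: "l2 P 1 i < pS2in P" using h L by simp
  have lt1: "l1 P 2 < pS1in P" using h1 L1 by simp
  define X21 where "X21 = (pS2in P - l2 P 1 i) / (palpha P * pk3 P)"
  define X12 where "X12 = (pS1in P - l1 P 2) / (palpha P * pk1 P)"
  have x1: "l2 P 1 i = pS2in P - palpha P * pk3 P * X21" using pos_ne by (simp add: X21_def)
  have x2: "X21 > 0" using lt apos k3pos by (simp add: X21_def)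
  have y1: "l1 P 2 = pS1in P - palpha P * pk1 P * X12" using pos_ne by (simp add: X12_def)
  have y2: "X12 > 0" using lt1 apos k1pos by (simp add: X12_def)
  have y3: "palpha P * pk2 P * X12 = pk2 P / pk1 P * (pS1in P - l1 P 2)" using pos_ne by (simp add: X12_def)
  have "palpha P * pk2 P * X12 > 0" using y2 apos k2pos by simp
  then have A: "l2 P 1 i - palpha P * pk2 P * (0 - X12) > 0" using L by simp
  obtain x where x: "sol2 P (l2 P 1 i) 0 X12 X21 x" using sol2_exists[OF x2 A] by auto
  define S22 where "S22 = pk2 P / pk1 P * (pS1in P - l1 P 2) + pS2in P - palpha P * pk3 P * x"
  have S: "S22 = l2 P 1 i - palpha P * pk2 P * (0 - X12) + palpha P * pk3 P * (X21 - x)"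
    using x1 y3 by (simp add: S22_def algebra_simps)
  note Q = sol2_steady[OF x S]
  have "steady P (pS1in P, 0, l2 P 1 i, X21, l1 P 2, X12, S22, x)"
    unfolding steady_iff S22_def using x1 x2 y1 y2 y3 L L1 Q[unfolded S22_def] S1pos S2pos by (simp add: algebra_simps)
  moreover have "E0i_11 P i (pS1in P, 0, l2 P 1 i, X21, l1 P 2, X12, S22, x)"
    using fin fin1 x2 y2 x unfolding E0i_11_def Let_def X21_def[symmetric] X12_def[symmetric] S22_def by auto
  ultimately show "\<exists>\<xi>. steady P \<xi> \<and> E0i_11 P i \<xi>" by blast
qed

lemma ex1i11: assumes i: "i \<in> {1,2}"
  shows "(\<exists>\<xi>. steady P \<xi> \<and> E1i_11 P i \<xi>) \<longleftrightarrow> ereal (pS1in P) > max (lam1 P 1) (FF P 1 i)"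
proof
  assume "\<exists>\<xi>. steady P \<xi> \<and> E1i_11 P i \<xi>"
  then obtain \<xi> where e: "E1i_11 P i \<xi>" by blast
  then have h: "ereal (pS1in P) > lam1 P 1" and fin: "lam1 P 1 \<noteq> \<infinity>" "lam2 P 1 i \<noteq> \<infinity>"
    and "pk2 P * (pS1in P - real_of_ereal (FF P 1 i)) / (palpha P * pk1 P * pk3 P) > 0"
    by (auto simp: E1i_11_def Let_def)
  then have "pS1in P > real_of_ereal (FF P 1 i)"
    using apos k1pos k2pos k3pos mult_pos_pos[OF apos k1pos] mult_pos_pos[OF mult_pos_pos[OF apos k1pos] k3pos]
    by (auto simp add: zero_less_divide_iff zero_less_mult_iff)
  then show "ereal (pS1in P) > max (lam1 P 1) (FF P 1 i)" using h FF_fin[OF fin i] by simp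
next
  assume hm: "ereal (pS1in P) > max (lam1 P 1) (FF P 1 i)"
  then have h: "ereal (pS1in P) > lam1 P 1" and h2: "ereal (pS1in P) > FF P 1 i" by auto
  then have fin1: "lam1 P 1 \<noteq> \<infinity>" and fin: "lam2 P 1 i \<noteq> \<infinity>" using FF_inf[of 1 i] by auto
  note L = lam1_fin[OF fin1] and X = X12s_props[OF h] and L2 = lam2_fin[OF fin i]
  define F where "F = l1 P 1 + pk1 P / pk2 P * (l2 P 1 i - pS2in P)"
  have FF: "FF P 1 i = ereal F" using FF_fin[OF fin1 fin i] by (simp add: F_def)
  have ltF: "F < pS1in P" using h2 FF by simp
  define X21 where "X21 = pk2 P * (pS1in P - F) / (palpha P * pk1 P * pk3 P)"
  have x21: "X21 > 0" using ltF apos k1pos k2pos k3pos by (simp add: X21_def)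
  have x21e: "l2 P 1 i = pS2in P + palpha P * pk2 P * X11s P - palpha P * pk3 P * X21"
    using pos_ne by (simp add: X21_def F_def X11s_def field_simps)
  have A: "l2 P 1 i - palpha P * pk2 P * (X11s P - X12s P) > 0"
  proof -
    have "palpha P * pk2 P * (X11s P - X12s P) < 0" using X(2) apos k2pos by (simp add: mult_pos_neg)
    then show ?thesis using L2 by simp
  qed
  obtain x where x: "sol2 P (l2 P 1 i) (X11s P) (X12s P) X21 x" using sol2_exists[OF x21 A] by auto
  define S22 where "S22 = pS2in P + palpha P * pk2 P * X12s P - palpha P * pk3 P * x"
  have S: "S22 = l2 P 1 i - palpha P * pk2 P * (X11s P - X12s P) + palpha P * pk3 P * (X21 - x)"
    using x21e by (simp add: S22_def algebra_simps)
  note Q = sol2_steady[OF x S]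
  have lt: "l1 P 1 < pS1in P" using h L by simp
  have x1: "l1 P 1 = pS1in P - palpha P * pk1 P * X11s P" using pos_ne by (simp add: X11s_def)
  have x3: "pS1in P - palpha P * pk1 P * X12s P > 0" using X(3) apos k1pos by (simp add: Bnd_def field_simps)
  have x4: "pmu1 P (pS1in P - palpha P * pk1 P * X12s P) * X12s P = palpha P * Dc P 2 * (X12s P - X11s P)"
    using X(2,4) X(1) by (simp add: f1_def g1_def)
  have "steady P (l1 P 1, X11s P, l2 P 1 i, X21, pS1in P - palpha P * pk1 P * X12s P, X12s P, S22, x)"
    unfolding steady_iff S22_def using x1 x3 x4 x21 x21e L L2 X(1-4) Q[unfolded S22_def] S1pos S2pos
    by (simp add: algebra_simps)
  moreover have "E1i_11 P i (l1 P 1, X11s P, l2 P 1 i, X21, pS1in P - palpha P * pk1 P * X12s P, X12s P, S22, x)"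
    using fin fin1 h X(1-4) x21 x FF unfolding E1i_11_def Let_def X21_def S22_def by auto
  ultimately show "\<exists>\<xi>. steady P \<xi> \<and> E1i_11 P i \<xi>" by blast
qed

lemma main: "(\<forall>\<xi>. steady P \<xi> \<longrightarrow>
            E00_00 P \<xi> \<or> (\<exists>i\<in>{1,2}. E00_0i P i \<xi>) \<or> E00_10 P \<xi> \<or>
            (\<exists>i\<in>{1,2}. E00_1i P i \<xi>) \<or> E10_10 P \<xi> \<or> (\<exists>i\<in>{1,2}. E10_1i P i \<xi>) \<or>
            (\<exists>i\<in>{1,2}. E0i_01 P i \<xi>) \<or> (\<exists>i\<in>{1,2}. E0i_11 P i \<xi>) \<or>
            (\<exists>i\<in>{1,2}. E1i_11 P i \<xi>))
       \<and> (\<exists>\<xi>. steady P \<xi> \<and> E00_00 P \<xi>)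
       \<and> (\<forall>i\<in>{1,2}. (\<exists>\<xi>. steady P \<xi> \<and> E00_0i P i \<xi>) \<longleftrightarrow> ereal (pS2in P) > lam2 P 2 i)
       \<and> ((\<exists>\<xi>. steady P \<xi> \<and> E00_10 P \<xi>) \<longleftrightarrow> ereal (pS1in P) > lam1 P 2)
       \<and> (\<forall>i\<in>{1,2}. (\<exists>\<xi>. steady P \<xi> \<and> E00_1i P i \<xi>) \<longleftrightarrow>
            ereal (pS1in P) > max (lam1 P 2) (FF P 2 i))
       \<and> ((\<exists>\<xi>. steady P \<xi> \<and> E10_10 P \<xi>) \<longleftrightarrow> ereal (pS1in P) > lam1 P 1)
       \<and> (\<forall>i\<in>{1,2}. (\<exists>\<xi>. steady P \<xi> \<and> E10_1i P i \<xi>) \<longleftrightarrow>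
            ereal (pS1in P) > lam1 P 1 \<and> phi P i > 0)
       \<and> (\<forall>i\<in>{1,2}. (\<exists>\<xi>. steady P \<xi> \<and> E0i_01 P i \<xi>) \<longleftrightarrow> ereal (pS2in P) > lam2 P 1 i)
       \<and> (\<forall>i\<in>{1,2}. (\<exists>\<xi>. steady P \<xi> \<and> E0i_11 P i \<xi>) \<longleftrightarrow>
            ereal (pS1in P) > lam1 P 2 \<and> ereal (pS2in P) > lam2 P 1 i)
       \<and> (\<forall>i\<in>{1,2}. (\<exists>\<xi>. steady P \<xi> \<and> E1i_11 P i \<xi>) \<longleftrightarrow>
            ereal (pS1in P) > max (lam1 P 1) (FF P 1 i))"
  apply (intro conjI)
  subgoal using classify by blast
  subgoal using ex00 by blast
  subgoal using ex0i by blast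
  subgoal using ex10 by blast
  subgoal using ex1i by blast
  subgoal using ex1010 by blast
  subgoal using ex101i by blast
  subgoal using ex0i01 by blast
  subgoal using ex0i11 by blast
  subgoal using ex1i11 by blast
  done


end

theorem proposition2:
  fixes P :: chemo
  assumes "pD P > 0" and "0 < pr P" and "pr P < 1"
    and "0 < palpha P" and "palpha P < 1"
    and "pk1 P > 0" and "pk2 P > 0" and "pk3 P > 0"
    and "pS1in P > 0" and "pS2in P > 0"
    and "H1 (pmu1 P) (pm1 P)" and "H2 (pmu2 P) (pS2m P)"
  shows "(\<forall>\<xi>. steady P \<xi> \<longrightarrow>
            E00_00 P \<xi> \<or> (\<exists>i\<in>{1,2}. E00_0i P i \<xi>) \<or> E00_10 P \<xi> \<or>
            (\<exists>i\<in>{1,2}. E00_1i P i \<xi>) \<or> E10_10 P \<xi> \<or> (\<exists>i\<in>{1,2}. E10_1i P i \<xi>) \<or>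
            (\<exists>i\<in>{1,2}. E0i_01 P i \<xi>) \<or> (\<exists>i\<in>{1,2}. E0i_11 P i \<xi>) \<or>
            (\<exists>i\<in>{1,2}. E1i_11 P i \<xi>))
       \<and> (\<exists>\<xi>. steady P \<xi> \<and> E00_00 P \<xi>)
       \<and> (\<forall>i\<in>{1,2}. (\<exists>\<xi>. steady P \<xi> \<and> E00_0i P i \<xi>) \<longleftrightarrow> ereal (pS2in P) > lam2 P 2 i)
       \<and> ((\<exists>\<xi>. steady P \<xi> \<and> E00_10 P \<xi>) \<longleftrightarrow> ereal (pS1in P) > lam1 P 2)
       \<and> (\<forall>i\<in>{1,2}. (\<exists>\<xi>. steady P \<xi> \<and> E00_1i P i \<xi>) \<longleftrightarrow>
            ereal (pS1in P) > max (lam1 P 2) (FF P 2 i))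
       \<and> ((\<exists>\<xi>. steady P \<xi> \<and> E10_10 P \<xi>) \<longleftrightarrow> ereal (pS1in P) > lam1 P 1)
       \<and> (\<forall>i\<in>{1,2}. (\<exists>\<xi>. steady P \<xi> \<and> E10_1i P i \<xi>) \<longleftrightarrow>
            ereal (pS1in P) > lam1 P 1 \<and> phi P i > 0)
       \<and> (\<forall>i\<in>{1,2}. (\<exists>\<xi>. steady P \<xi> \<and> E0i_01 P i \<xi>) \<longleftrightarrow> ereal (pS2in P) > lam2 P 1 i)
       \<and> (\<forall>i\<in>{1,2}. (\<exists>\<xi>. steady P \<xi> \<and> E0i_11 P i \<xi>) \<longleftrightarrow>
            ereal (pS1in P) > lam1 P 2 \<and> ereal (pS2in P) > lam2 P 1 i)
       \<and> (\<forall>i\<in>{1,2}. (\<exists>\<xi>. steady P \<xi> \<and> E1i_11 P i \<xi>) \<longleftrightarrow>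
            ereal (pS1in P) > max (lam1 P 1) (FF P 1 i))"
proof -
  interpret cctx P using assms unfolding cctx_def by blast
  show ?thesis by (rule main)
qed

end
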